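(* Let $X$ and $Y$ be $\mathbb{N}$-valued random variables with $P\{X=0\}\ne1$, $P\{Y=0\}\neq 1$ and $\mathbb{E}[X^2+Y^2]<+\infty$. Let $f_t$ be the solution of the kinetic equation with initial probability density $f_0$ on $\mathbb{N}$ with mean $m_0$ and $\mathrm{Var}(f_0)<+\infty$. Set $\alpha_1=\mathbb{E}[X]+\mathbb{E}[Y]-1$, $\alpha_2=\mathbb{E}[X]^2+\mathbb{E}[Y]^2-1$, $\beta=\mathrm{Var}(X)+\mathrm{Var}(Y)$, $\gamma=\mathbb{E}[X]\mathbb{E}[Y]$. Then for every $t>0$ $$\begin{aligned}\mathrm{Var}(f_t)={}&M_2(f_0)e^{\alpha_2t}-m_0^2e^{2\alpha_1t}+\beta m_0\Big[\frac{e^{\alpha_1t}-e^{\alpha_2t}}{\alpha_1-\alpha_2}\mathbb{I}\{\alpha_1\ne\alpha_2\}+te^{\alpha_2t}\mathbb{I}\{\alpha_1=\alpha_2\}\Big]\\&+2\gamma m_0^2\Big[\frac{e^{2\alpha_1t}-e^{\alpha_2t}}{2\alpha_1-\alpha_2}\mathbb{I}\{2\alpha_1\ne\alpha_2\}+te^{\alpha_2t}\mathbb{I}\{2\alpha_1=\alpha_2\}\Big].\end{aligned}$$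
   Context: $M_2(f)=\sum_v v^2f(v)$, $\mathrm{Var}(f)=M_2(f)-M_1(f)^2$, $\mathbb{I}$ is the indicator function. The kinetic equation is $\partial_t\hat f_t(z)=\hat f_t(\hat p_X(z))\hat f_t(\hat p_Y(z))-\hat f_t(z)$, $z\in[0,1]$, $t>0$, for $\hat f_t(z)=\sum_vz^vf_t(v)$, with $\hat p_X(z)=\mathbb{E}[z^X]$, $\hat p_Y(z)=\mathbb{E}[z^Y]$; it has a unique global solution for each initial probability density (equivalently $\partial_tf_t=Q^+(f_t,f_t)-f_t$ with $Q^+(f,g)(v)=P\{\sum_{i=1}^{V_1}Y_i+\sum_{i=1}^{V_2}X_i=v\}$, $V_1\sim f$, $V_2\sim g$, $X_i$ i.i.d. $\sim X$, $Y_i$ i.i.d. $\sim Y$, all independent). *)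

theory Defs
  imports "HOL-Probability.Probability"
begin

definition prob_density :: "(nat \<Rightarrow> real) \<Rightarrow> bool" where
  "prob_density f \<longleftrightarrow> (\<forall>v. 0 \<le> f v) \<and> f sums 1"

definition M1 :: "(nat \<Rightarrow> real) \<Rightarrow> real" where
  "M1 f = (\<Sum>v. real v * f v)"

definition M2 :: "(nat \<Rightarrow> real) \<Rightarrow> real" where
  "M2 f = (\<Sum>v. (real v)^2 * f v)"

definition Var :: "(nat \<Rightarrow> real) \<Rightarrow> real" where
  "Var f = M2 f - (M1 f)^2"

definition gen_fun :: "(nat \<Rightarrow> real) \<Rightarrow> real \<Rightarrow> real" where
  "gen_fun f z = (\<Sum>v. z ^ v * f v)"

definition pgf :: "nat pmf \<Rightarrow> real \<Rightarrow> real" where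
  "pgf p z = measure_pmf.expectation p (\<lambda>x. z ^ x)"

definition kinetic_solution :: "nat pmf \<Rightarrow> nat pmf \<Rightarrow> (nat \<Rightarrow> real) \<Rightarrow> (real \<Rightarrow> nat \<Rightarrow> real) \<Rightarrow> bool" where
  "kinetic_solution pX pY f0 f \<longleftrightarrow>
     f 0 = f0 \<and>
     (\<forall>t\<ge>0. prob_density (f t)) \<and>
     (\<forall>z\<in>{0..1}. continuous_on {0..} (\<lambda>t. gen_fun (f t) z) \<and>
        (\<forall>t>0. ((\<lambda>s. gen_fun (f s) z) has_real_derivative
                 (gen_fun (f t) (pgf pX z) * gen_fun (f t) (pgf pY z) - gen_fun (f t) z)) (at t)))"

end

theory Submission
  imports Defs
begin


definition q1 :: "nat \<Rightarrow> real \<Rightarrow> real" where "q1 v w = (\<Sum>k<v. w^k)"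
definition q2 :: "nat \<Rightarrow> real \<Rightarrow> real" where "q2 v w = (\<Sum>k<v. q1 k w)"
definition G1 :: "(nat \<Rightarrow> real) \<Rightarrow> real \<Rightarrow> real" where "G1 g w = (\<Sum>v. g v * q1 v w)"
definition G2 :: "(nat \<Rightarrow> real) \<Rightarrow> real \<Rightarrow> real" where "G2 g w = (\<Sum>v. g v * q2 v w)"

lemma q1_Suc: "q1 (Suc v) w = q1 v w + w^v" unfolding q1_def by simp

lemma q1_id: "(1 - w) * q1 v w = 1 - w^v"
proof (induction v)
  case 0 then show ?case by (simp add: q1_def)
next
  case (Suc v)
  have "(1-w)*q1 (Suc v) w = (1-w)*q1 v w + (1-w)*w^v" by (simp add: q1_Suc algebra_simps)
  then show ?case using Suc.IH by (simp add: algebra_simps)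
qed
lemma q2_Suc: "q2 (Suc v) w = q2 v w + q1 v w" unfolding q2_def by simp

lemma q2_id: "(1 - w)^2 * q2 v w = (1 - w) * real v - (1 - w^v)"
proof (induction v)
  case 0 then show ?case by (simp add: q2_def)
next
  case (Suc v)
  have "(1 - w)^2 * q2 (Suc v) w = (1 - w)^2 * q2 v w + (1-w) * ((1-w) * q1 v w)"
    by (simp add: q2_Suc algebra_simps power2_eq_square)
  also have "\<dots> = (1 - w) * real v - (1 - w^v) + (1-w) * (1 - w^v)"
    using Suc q1_id by simp
  finally show ?case by (simp add: algebra_simps)
qed

lemma q1_one: "q1 v 1 = real v" unfolding q1_def by simp
lemma q2_one: "2 * q2 v 1 = (real v)^2 - real v"
  by (induction v) (auto simp: q2_Suc q1_one q2_def[of 0] algebra_simps power2_eq_square)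

lemma q1_nonneg: "0 \<le> w \<Longrightarrow> 0 \<le> q1 v w" unfolding q1_def by (intro sum_nonneg) auto
lemma q2_nonneg: "0 \<le> w \<Longrightarrow> 0 \<le> q2 v w" unfolding q2_def by (intro sum_nonneg q1_nonneg)

lemma q1_mono: "0 \<le> w \<Longrightarrow> w \<le> w' \<Longrightarrow> q1 v w \<le> q1 v w'"
  unfolding q1_def by (intro sum_mono power_mono) auto
lemma q2_mono: "0 \<le> w \<Longrightarrow> w \<le> w' \<Longrightarrow> q2 v w \<le> q2 v w'"
  unfolding q2_def by (intro sum_mono q1_mono) auto

lemma q1_le: "0 \<le> w \<Longrightarrow> w \<le> 1 \<Longrightarrow> q1 v w \<le> real v"
  using q1_mono[of w 1 v] by (simp add: q1_one)
lemma q2_le: "0 \<le> w \<Longrightarrow> w \<le> 1 \<Longrightarrow> q2 v w \<le> (real v)^2"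
proof -
  assume "0 \<le> w" "w \<le> 1"
  then have "q2 v w \<le> q2 v 1" by (rule q2_mono)
  also have "\<dots> \<le> (real v)^2" using q2_one[of v] of_nat_0_le_iff[of v] zero_le_power2[of "real v"] by linarith
  finally show ?thesis .
qed

lemma cont_q1: "continuous_on A (q1 v)" unfolding q1_def by (intro continuous_intros)
lemma cont_q2: "continuous_on A (q2 v)" unfolding q2_def q1_def by (intro continuous_intros)

lemma cont_series:
  fixes h :: "nat \<Rightarrow> real \<Rightarrow> real"
  assumes "\<And>v. continuous_on A (h v)" "\<And>v x. x \<in> A \<Longrightarrow> \<bar>h v x\<bar> \<le> B v" "summable B"
  shows "continuous_on A (\<lambda>x. \<Sum>v. h v x)"
proof (rule uniform_limit_theorem[where f = "\<lambda>n x. \<Sum>i<n. h i x" and F = sequentially])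
  show "\<forall>\<^sub>F n in sequentially. continuous_on A (\<lambda>x. \<Sum>i<n. h i x)"
    using assms(1) by (intro always_eventually allI continuous_intros) auto
  show "uniform_limit A (\<lambda>n x. \<Sum>i<n. h i x) (\<lambda>x. \<Sum>v. h v x) sequentially"
    by (rule Weierstrass_m_test) (use assms in auto)
qed simp

context
  fixes g :: "nat \<Rightarrow> real"
  assumes pd: "prob_density g"
begin

lemma g_nonneg: "0 \<le> g v" using pd unfolding prob_density_def by auto
lemma g_sums: "g sums 1" using pd unfolding prob_density_def by auto
lemma g_summable: "summable g" using g_sums by (simp add: sums_iff)

lemma gen_summable: "0 \<le> w \<Longrightarrow> w \<le> 1 \<Longrightarrow> summable (\<lambda>v. w^v * g v)"
  by (rule summable_comparison_test'[OF g_summable, of 0])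
     (auto simp: g_nonneg abs_mult intro!: mult_left_le_one_le power_le_one)

lemma gen_one: "gen_fun g 1 = 1" unfolding gen_fun_def using g_sums by (simp add: sums_iff)

lemma gen_nonneg: "0 \<le> w \<Longrightarrow> w \<le> 1 \<Longrightarrow> 0 \<le> gen_fun g w"
  unfolding gen_fun_def by (intro suminf_nonneg) (auto simp: g_nonneg intro!: gen_summable)

lemma gen_le1: "0 \<le> w \<Longrightarrow> w \<le> 1 \<Longrightarrow> gen_fun g w \<le> 1"
proof -
  assume w: "0 \<le> w" "w \<le> 1"
  have "gen_fun g w \<le> (\<Sum>v. g v)" unfolding gen_fun_def
    by (intro suminf_le gen_summable w g_summable)
       (auto intro!: mult_left_le_one_le power_le_one g_nonneg w zero_le_power)
  thus ?thesis using g_sums by (simp add: sums_iff)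
qed

lemma one_minus_gen: "0 \<le> w \<Longrightarrow> w \<le> 1 \<Longrightarrow> 1 - gen_fun g w = (\<Sum>v. g v * (1 - w^v))"
proof -
  assume w: "0 \<le> w" "w \<le> 1"
  have "(\<lambda>v. g v - w^v * g v) sums (1 - gen_fun g w)"
    unfolding gen_fun_def by (intro sums_diff g_sums summable_sums gen_summable w)
  thus ?thesis by (simp add: sums_iff algebra_simps)
qed

lemma q1_summable: "0 \<le> w \<Longrightarrow> w < 1 \<Longrightarrow> summable (\<lambda>v. g v * q1 v w)"
proof -
  assume w: "0 \<le> w" "w < 1"
  have b: "\<bar>1 - w^v\<bar> \<le> 1" for v
    using w power_le_one[of w v] zero_le_power[of w v] by auto
  have "summable (\<lambda>v. g v * (1 - w^v) / (1 - w))"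
  proof (rule summable_comparison_test'[where g = "\<lambda>v. g v / (1 - w)" and N = 0])
    show "summable (\<lambda>v. g v / (1 - w))" by (intro summable_divide g_summable)
    fix n
    have "g n * \<bar>1 - w^n\<bar> \<le> g n * 1" by (intro mult_left_mono b g_nonneg)
    then show "norm (g n * (1 - w^n) / (1 - w)) \<le> g n / (1 - w)"
      using w by (simp add: abs_mult g_nonneg divide_right_mono)
  qed
  moreover have "g v * q1 v w = g v * (1 - w^v) / (1 - w)" for v
  proof -
    have "g v * (1 - w^v) = g v * q1 v w * (1 - w)" using q1_id[of w v] by (simp add: mult_ac)
    thus ?thesis using w by (simp add: divide_simps) (metis eq_commute)
  qed
  ultimately show ?thesis by simp
qed

lemma one_minus_gen_G1: "0 \<le> w \<Longrightarrow> w < 1 \<Longrightarrow> 1 - gen_fun g w = (1 - w) * G1 g w"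
proof -
  assume w: "0 \<le> w" "w < 1"
  have e: "g v * (1 - w^v) = (1-w) * (g v * q1 v w)" for v
    using q1_id[of w v] by (metis mult.left_commute)
  have "1 - gen_fun g w = (\<Sum>v. (1 - w) * (g v * q1 v w))"
    using one_minus_gen[of w] w by (simp only: e)
  also have "\<dots> = (1 - w) * G1 g w" unfolding G1_def
    by (rule suminf_mult[OF q1_summable]) (use w in auto)
  finally show ?thesis .
qed

lemma G1_nonneg: "0 \<le> w \<Longrightarrow> w < 1 \<Longrightarrow> 0 \<le> G1 g w"
  unfolding G1_def by (intro suminf_nonneg q1_summable) (auto intro!: g_nonneg q1_nonneg mult_nonneg_nonneg)

lemma M1_bound:
  assumes "\<And>z. 0 \<le> z \<Longrightarrow> z < 1 \<Longrightarrow> 1 - gen_fun g z \<le> (1 - z) * B"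
  shows "summable (\<lambda>v. real v * g v)" "M1 g \<le> B"
proof -
  have part: "(\<Sum>v<N. real v * g v) \<le> B" for N
  proof -
    have le: "(\<Sum>v<N. g v * q1 v z) \<le> B" if z: "0 \<le> z" "z < 1" for z
    proof -
      have "(\<Sum>v<N. g v * q1 v z) \<le> G1 g z" unfolding G1_def
        by (intro sum_le_suminf q1_summable z) (auto intro!: g_nonneg q1_nonneg mult_nonneg_nonneg z)
      also have "\<dots> \<le> B" using assms[OF z] one_minus_gen_G1[OF z] z by auto
      finally show ?thesis .
    qed
    have lim: "((\<lambda>z. \<Sum>v<N. g v * q1 v z) \<longlongrightarrow> (\<Sum>v<N. g v * q1 v 1)) (at_left 1)"
      unfolding q1_def by (intro tendsto_intros)
    have "(\<Sum>v<N. g v * q1 v 1) \<le> B"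
      by (rule tendsto_upperbound[OF lim], rule eventually_mono[OF eventually_at_left_real[of 0 1]]) (auto intro!: le)
    thus ?thesis by (simp add: q1_one mult.commute)
  qed
  show sm: "summable (\<lambda>v. real v * g v)"
    by (rule summableI_nonneg_bounded[OF _ part]) (auto intro: g_nonneg mult_nonneg_nonneg)
  show "M1 g \<le> B" unfolding M1_def
    by (rule suminf_le_const[OF sm part])
qed


lemma gq1_le: "0 \<le> w \<Longrightarrow> w \<le> 1 \<Longrightarrow> g v * q1 v w \<le> real v * g v"
  using mult_left_mono[OF q1_le[of w v] g_nonneg[of v]] by (simp add: mult.commute)
lemma gq2_le: "0 \<le> w \<Longrightarrow> w \<le> 1 \<Longrightarrow> g v * q2 v w \<le> (real v)^2 * g v"
  using mult_left_mono[OF q2_le[of w v] g_nonneg[of v]] by (simp add: mult.commute)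

lemma one_minus_gen_sums: "0 \<le> w \<Longrightarrow> w \<le> 1 \<Longrightarrow> (\<lambda>v. g v * (1 - w^v)) sums (1 - gen_fun g w)"
proof -
  assume w: "0 \<le> w" "w \<le> 1"
  have "(\<lambda>v. g v - w^v * g v) sums (1 - gen_fun g w)"
    unfolding gen_fun_def by (intro sums_diff g_sums summable_sums gen_summable w)
  thus ?thesis by (simp add: algebra_simps)
qed

lemma q2sum:
  assumes "summable (\<lambda>v. real v * g v)" "summable (\<lambda>v. (real v)^2 * g v)"
  shows "(\<lambda>v. g v * q2 v 1) sums ((M2 g - M1 g) / 2)"
proof -
  have e: "(\<lambda>v. g v * q2 v 1) = (\<lambda>v. ((real v)^2 * g v - real v * g v) / 2)"
  proof
    fix v
    have "2 * (g v * q2 v 1) = (real v)^2 * g v - real v * g v"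
    proof -
      have "2 * (g v * q2 v 1) = g v * (2 * q2 v 1)" by (simp only: mult_ac)
      also have "\<dots> = g v * ((real v)^2 - real v)" by (simp only: q2_one)
      finally show ?thesis by (simp add: algebra_simps)
    qed
    thus "g v * q2 v 1 = ((real v)^2 * g v - real v * g v) / 2" by simp
  qed
  show ?thesis unfolding e M2_def M1_def
    by (intro sums_divide sums_diff summable_sums assms)
qed

context
  assumes sm1: "summable (\<lambda>v. real v * g v)"
begin

lemma M1_nonneg: "0 \<le> M1 g" unfolding M1_def
  by (intro suminf_nonneg sm1) (auto intro!: mult_nonneg_nonneg g_nonneg)

lemma G1_summable: "0 \<le> w \<Longrightarrow> w \<le> 1 \<Longrightarrow> summable (\<lambda>v. g v * q1 v w)"
  by (rule summable_comparison_test'[OF sm1, of 0])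
     (auto simp: abs_mult g_nonneg q1_nonneg intro!: gq1_le)

lemma G1_one: "G1 g 1 = M1 g" unfolding G1_def M1_def by (simp add: q1_one mult.commute)

lemma G1_le: "0 \<le> w \<Longrightarrow> w \<le> 1 \<Longrightarrow> G1 g w \<le> M1 g"
  unfolding G1_def M1_def
  by (intro suminf_le G1_summable sm1) (auto intro!: gq1_le)

lemma G1_ge: "0 \<le> w \<Longrightarrow> w \<le> 1 \<Longrightarrow> 0 \<le> G1 g w"
  unfolding G1_def by (intro suminf_nonneg G1_summable) (auto intro!: mult_nonneg_nonneg g_nonneg q1_nonneg)

lemma one_minus_gen_G1': "0 \<le> w \<Longrightarrow> w \<le> 1 \<Longrightarrow> 1 - gen_fun g w = (1 - w) * G1 g w"
  using one_minus_gen_G1[of w] gen_one by (cases "w = 1") auto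

lemma G1_cont: "continuous_on {0..1} (G1 g)"
  unfolding G1_def
proof (rule cont_series[where B = "\<lambda>v. real v * g v"])
  show "continuous_on {0..1} (\<lambda>x. g v * q1 v x)" for v
    by (intro continuous_on_mult continuous_on_const cont_q1)
  show "\<bar>g v * q1 v x\<bar> \<le> real v * g v" if "x \<in> {0..1}" for v x
    using that gq1_le[of x v] g_nonneg[of v] q1_nonneg[of x v] by (simp add: abs_mult)
qed (rule sm1)

lemma one_minus_gen_le: "0 \<le> w \<Longrightarrow> w \<le> 1 \<Longrightarrow> 1 - gen_fun g w \<le> (1 - w) * M1 g"
  using one_minus_gen_G1'[of w] G1_le[of w] by (auto intro: mult_left_mono)

lemma M2_bound:
  assumes "\<And>z. 0 \<le> z \<Longrightarrow> z < 1 \<Longrightarrow> (1 - z) * M1 g - (1 - gen_fun g z) \<le> (1 - z)^2 * B"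
  shows "summable (\<lambda>v. (real v)^2 * g v)" "M2 g - M1 g \<le> 2 * B"
proof -
  have part: "(\<Sum>v<N. g v * q2 v 1) \<le> B" for N
  proof -
    have le: "(\<Sum>v<N. g v * q2 v z) \<le> B" if z: "0 \<le> z" "z < 1" for z
    proof -
      have e: "g v * q2 v z = (real v * g v * (1 - z) - g v * (1 - z^v)) / (1-z)^2" for v
      proof -
        have "(1-z)^2 * (g v * q2 v z) = real v * g v * (1 - z) - g v * (1 - z^v)"
        proof -
          have "(1-z)^2 * (g v * q2 v z) = g v * ((1-z)^2 * q2 v z)" by (simp only: mult_ac)
          also have "\<dots> = g v * ((1 - z) * real v - (1 - z^v))" by (simp only: q2_id)
          finally show ?thesis by (simp add: algebra_simps)
        qed
        thus ?thesis using z by (simp add: divide_simps mult.commute)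
      qed
      have s1: "(\<lambda>v. real v * g v * (1 - z)) sums (M1 g * (1 - z))"
        unfolding M1_def by (intro sums_mult2 summable_sums sm1)
      have s2: "(\<lambda>v. g v * (1 - z^v)) sums (1 - gen_fun g z)"
        using one_minus_gen_sums[of z] z by simp
      have "(\<lambda>v. g v * q2 v z) sums (((M1 g * (1 - z)) - (1 - gen_fun g z)) / (1-z)^2)"
        unfolding e by (intro sums_divide sums_diff s1 s2)
      hence sm: "summable (\<lambda>v. g v * q2 v z)" and eq: "(\<Sum>v. g v * q2 v z) = ((M1 g * (1 - z)) - (1 - gen_fun g z)) / (1-z)^2"
        by (auto simp: sums_iff)
      have "(\<Sum>v<N. g v * q2 v z) \<le> (\<Sum>v. g v * q2 v z)"
        by (intro sum_le_suminf sm) (auto intro!: g_nonneg q2_nonneg mult_nonneg_nonneg z)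
      also have "\<dots> \<le> B" unfolding eq using assms[OF z] z by (simp add: divide_simps mult.commute)
      finally show ?thesis .
    qed
    have lim: "((\<lambda>z. \<Sum>v<N. g v * q2 v z) \<longlongrightarrow> (\<Sum>v<N. g v * q2 v 1)) (at_left 1)"
      unfolding q2_def q1_def by (intro tendsto_intros)
    show "(\<Sum>v<N. g v * q2 v 1) \<le> B"
      by (rule tendsto_upperbound[OF lim], rule eventually_mono[OF eventually_at_left_real[of 0 1]]) (auto intro!: le)
  qed
  have e2: "(real v)^2 * g v = 2 * (g v * q2 v 1) + real v * g v" for v
  proof -
    have "2 * (g v * q2 v 1) = g v * (2 * q2 v 1)" by (simp only: mult_ac)
    also have "\<dots> = g v * ((real v)^2 - real v)" by (simp only: q2_one)
    finally show ?thesis by (simp add: algebra_simps)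
  qed
  have part2: "(\<Sum>v<N. (real v)^2 * g v) \<le> 2 * B + M1 g" for N
  proof -
    have "(\<Sum>v<N. (real v)^2 * g v) = 2 * (\<Sum>v<N. g v * q2 v 1) + (\<Sum>v<N. real v * g v)"
      unfolding e2 by (simp add: sum.distrib sum_distrib_left)
    also have "(\<Sum>v<N. real v * g v) \<le> M1 g" unfolding M1_def
      by (intro sum_le_suminf sm1) (auto intro!: mult_nonneg_nonneg g_nonneg)
    finally show ?thesis using part[of N] by linarith
  qed
  show sm2: "summable (\<lambda>v. (real v)^2 * g v)"
    by (rule summableI_nonneg_bounded[OF _ part2]) (auto intro: g_nonneg mult_nonneg_nonneg)
  have qs: "(\<lambda>v. g v * q2 v 1) sums ((M2 g - M1 g) / 2)" by (rule q2sum[OF sm1 sm2])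
  have sq: "summable (\<lambda>v. g v * q2 v 1)" using qs by (simp add: sums_iff)
  have "M2 g - M1 g = 2 * (\<Sum>v. g v * q2 v 1)" using qs by (simp add: sums_iff)
  moreover have "(\<Sum>v. g v * q2 v 1) \<le> B"
    by (rule suminf_le_const[OF sq part])
  ultimately show "M2 g - M1 g \<le> 2 * B" by simp
qed

end

context
  assumes sm2: "summable (\<lambda>v. (real v)^2 * g v)"
begin

lemma sm1_of_sm2: "summable (\<lambda>v. real v * g v)"
  by (rule summable_comparison_test'[OF sm2, of 0])
     (auto simp: abs_mult g_nonneg intro!: mult_right_mono g_nonneg, simp add: power2_eq_square)

lemma G2_summable: "0 \<le> w \<Longrightarrow> w \<le> 1 \<Longrightarrow> summable (\<lambda>v. g v * q2 v w)"
  by (rule summable_comparison_test'[OF sm2, of 0])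
     (auto simp: abs_mult g_nonneg q2_nonneg intro!: gq2_le)

lemma G2_one: "2 * G2 g 1 = M2 g - M1 g"
  using q2sum[OF sm1_of_sm2 sm2] unfolding G2_def by (simp add: sums_iff)

lemma G2_le: "0 \<le> w \<Longrightarrow> w \<le> 1 \<Longrightarrow> G2 g w \<le> G2 g 1"
  unfolding G2_def
  by (intro suminf_le G2_summable) (auto intro!: mult_left_mono q2_mono g_nonneg)

lemma G2_ge: "0 \<le> w \<Longrightarrow> w \<le> 1 \<Longrightarrow> 0 \<le> G2 g w"
  unfolding G2_def by (intro suminf_nonneg G2_summable) (auto intro!: mult_nonneg_nonneg g_nonneg q2_nonneg)

lemma G2_cont: "continuous_on {0..1} (G2 g)"
  unfolding G2_def
proof (rule cont_series[where B = "\<lambda>v. (real v)^2 * g v"])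
  show "continuous_on {0..1} (\<lambda>x. g v * q2 v x)" for v
    by (intro continuous_on_mult continuous_on_const cont_q2)
  show "\<bar>g v * q2 v x\<bar> \<le> (real v)^2 * g v" if "x \<in> {0..1}" for v x
    using that gq2_le[of x v] g_nonneg[of v] q2_nonneg[of x v] by (simp add: abs_mult)
qed (rule sm2)

lemma J_G2: "0 \<le> w \<Longrightarrow> w \<le> 1 \<Longrightarrow> (1 - w) * M1 g - (1 - gen_fun g w) = (1 - w)^2 * G2 g w"
proof -
  assume w: "0 \<le> w" "w \<le> 1"
  have e: "(1-w)^2 * (g v * q2 v w) = real v * g v * (1 - w) - g v * (1 - w^v)" for v
  proof -
    have "(1-w)^2 * (g v * q2 v w) = g v * ((1-w)^2 * q2 v w)" by (simp only: mult_ac)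
    also have "\<dots> = g v * ((1 - w) * real v - (1 - w^v))" by (simp only: q2_id)
    finally show ?thesis by (simp add: algebra_simps)
  qed
  have s1: "(\<lambda>v. real v * g v * (1 - w)) sums (M1 g * (1 - w))"
    unfolding M1_def by (intro sums_mult2 summable_sums sm1_of_sm2)
  have "(\<lambda>v. (1-w)^2 * (g v * q2 v w)) sums (M1 g * (1 - w) - (1 - gen_fun g w))"
    unfolding e by (intro sums_diff s1 one_minus_gen_sums w)
  moreover have "(\<lambda>v. (1-w)^2 * (g v * q2 v w)) sums ((1-w)^2 * G2 g w)"
    unfolding G2_def by (intro sums_mult summable_sums G2_summable w)
  ultimately show ?thesis using sums_unique2 by (fastforce simp: mult.commute)
qed

end

end



lemma pmf_integrable_iff:
  fixes p :: "nat pmf" and h :: "nat \<Rightarrow> real"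
  shows "integrable (measure_pmf p) h \<longleftrightarrow> summable (\<lambda>x. norm (pmf p x * h x))"
  unfolding measure_pmf_eq_density
  by (subst integrable_density) (auto simp: integrable_count_space_nat_iff)

lemma pmf_expectation:
  fixes p :: "nat pmf" and h :: "nat \<Rightarrow> real"
  assumes "integrable (measure_pmf p) h"
  shows "measure_pmf.expectation p h = (\<Sum>x. pmf p x * h x)"
proof -
  have "integrable (count_space UNIV) (\<lambda>x. pmf p x * h x)"
    using assms unfolding measure_pmf_eq_density
    by (subst (asm) integrable_density) auto
  moreover have "measure_pmf.expectation p h = integral\<^sup>L (count_space UNIV) (\<lambda>x. pmf p x * h x)"
    unfolding measure_pmf_eq_density by (subst integral_density) auto
  ultimately show ?thesis by (simp add: integral_count_space_nat)
qed

lemma pmf_prob_density: "prob_density (pmf (p :: nat pmf))"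
proof -
  have "integrable (measure_pmf p) (\<lambda>x. 1::real)" by simp
  then have "measure_pmf.expectation p (\<lambda>x. 1::real) = (\<Sum>x. pmf p x * 1)"
    by (rule pmf_expectation)
  moreover have "summable (\<lambda>x. pmf p x * 1)"
    using pmf_integrable_iff[of p "\<lambda>x. 1"] by simp
  ultimately have "pmf p sums 1" by (simp add: sums_iff)
  thus ?thesis unfolding prob_density_def by simp
qed

lemma pmf_moments:
  fixes p :: "nat pmf"
  assumes int2: "integrable (measure_pmf p) (\<lambda>x. (real x)^2)"
  shows "summable (\<lambda>v. (real v)^2 * pmf p v)"
    "measure_pmf.expectation p real = M1 (pmf p)"
    "measure_pmf.variance p real = M2 (pmf p) - (M1 (pmf p))^2"
proof -
  show s2: "summable (\<lambda>v. (real v)^2 * pmf p v)"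
    using int2 unfolding pmf_integrable_iff by (simp add: mult.commute)
  have s1: "summable (\<lambda>v. real v * pmf p v)"
    by (rule sm1_of_sm2[OF pmf_prob_density s2])
  have i1: "integrable (measure_pmf p) real"
    unfolding pmf_integrable_iff using s1 by (simp add: mult.commute)
  show e1: "measure_pmf.expectation p real = M1 (pmf p)"
    unfolding M1_def pmf_expectation[OF i1] by (simp add: mult.commute)
  have e2: "measure_pmf.expectation p (\<lambda>x. (real x)^2) = M2 (pmf p)"
    unfolding M2_def pmf_expectation[OF int2] by (simp add: mult.commute)
  show "measure_pmf.variance p real = M2 (pmf p) - (M1 (pmf p))^2"
    using measure_pmf.variance_eq[OF i1 int2] e1 e2 by simp
qed

lemma pgf_gen: "pgf p z = gen_fun (pmf p) z" if "0 \<le> z" "z \<le> 1"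
proof -
  have "summable (\<lambda>x. norm (pmf p x * z ^ x))"
    using gen_summable[OF pmf_prob_density that] that
    by (simp add: abs_mult mult.commute)
  then have "integrable (measure_pmf p) (\<lambda>x. z ^ x)" unfolding pmf_integrable_iff .
  then show ?thesis unfolding pgf_def gen_fun_def by (subst pmf_expectation) (simp_all add: mult.commute)
qed




locale kin =
  fixes pX pY :: "nat pmf" and f0 :: "nat \<Rightarrow> real" and f :: "real \<Rightarrow> nat \<Rightarrow> real"
  assumes intX: "integrable (measure_pmf pX) (\<lambda>x. (real x)^2)"
    and intY: "integrable (measure_pmf pY) (\<lambda>x. (real x)^2)"
    and pd0: "prob_density f0" and sm0: "summable (\<lambda>v. (real v)^2 * f0 v)"
    and sol: "kinetic_solution pX pY f0 f"
begin

definition "a z = gen_fun (pmf pX) z"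
definition "b z = gen_fun (pmf pY) z"
definition "mX = M1 (pmf pX)"
definition "mY = M1 (pmf pY)"
definition "m0 = M1 f0"
definition "K = mX + mY"
definition "phi s z = gen_fun (f s) z"

lemma pdX: "prob_density (pmf pX)" by (rule pmf_prob_density)
lemma pdY: "prob_density (pmf pY)" by (rule pmf_prob_density)
lemma smX: "summable (\<lambda>v. (real v)^2 * pmf pX v)" by (rule pmf_moments(1)[OF intX])
lemma smY: "summable (\<lambda>v. (real v)^2 * pmf pY v)" by (rule pmf_moments(1)[OF intY])
lemma smX1: "summable (\<lambda>v. real v * pmf pX v)" by (rule sm1_of_sm2[OF pdX smX])
lemma smY1: "summable (\<lambda>v. real v * pmf pY v)" by (rule sm1_of_sm2[OF pdY smY])
lemma sm01: "summable (\<lambda>v. real v * f0 v)" by (rule sm1_of_sm2[OF pd0 sm0])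

lemma mX_nonneg: "0 \<le> mX" unfolding mX_def by (rule M1_nonneg[OF pdX smX1])
lemma mY_nonneg: "0 \<le> mY" unfolding mY_def by (rule M1_nonneg[OF pdY smY1])
lemma m0_nonneg: "0 \<le> m0" unfolding m0_def by (rule M1_nonneg[OF pd0 sm01])
lemma K_nonneg: "0 \<le> K" unfolding K_def using mX_nonneg mY_nonneg by simp

lemma f0_eq: "f 0 = f0" using sol unfolding kinetic_solution_def by simp
lemma pd_f: "0 \<le> s \<Longrightarrow> prob_density (f s)" using sol unfolding kinetic_solution_def by simp

lemma cont_phi: "0 \<le> z \<Longrightarrow> z \<le> 1 \<Longrightarrow> continuous_on {0..} (\<lambda>t. phi t z)"
  using sol unfolding kinetic_solution_def phi_def by auto

lemma deriv_phi: "0 \<le> z \<Longrightarrow> z \<le> 1 \<Longrightarrow> 0 < t \<Longrightarrow>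
  ((\<lambda>s. phi s z) has_real_derivative (phi t (a z) * phi t (b z) - phi t z)) (at t)"
  using sol unfolding kinetic_solution_def phi_def a_def b_def by (auto simp: pgf_gen)

lemma a_range: "0 \<le> z \<Longrightarrow> z \<le> 1 \<Longrightarrow> 0 \<le> a z \<and> a z \<le> 1"
  unfolding a_def using gen_nonneg[OF pdX] gen_le1[OF pdX] by auto
lemma b_range: "0 \<le> z \<Longrightarrow> z \<le> 1 \<Longrightarrow> 0 \<le> b z \<and> b z \<le> 1"
  unfolding b_def using gen_nonneg[OF pdY] gen_le1[OF pdY] by auto
lemma a_le: "0 \<le> z \<Longrightarrow> z \<le> 1 \<Longrightarrow> 1 - a z \<le> (1 - z) * mX"
  unfolding a_def mX_def by (rule one_minus_gen_le[OF pdX smX1])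
lemma b_le: "0 \<le> z \<Longrightarrow> z \<le> 1 \<Longrightarrow> 1 - b z \<le> (1 - z) * mY"
  unfolding b_def mY_def by (rule one_minus_gen_le[OF pdY smY1])

lemma phi_range: "0 \<le> s \<Longrightarrow> 0 \<le> z \<Longrightarrow> z \<le> 1 \<Longrightarrow> 0 \<le> phi s z \<and> phi s z \<le> 1"
  unfolding phi_def using gen_nonneg[OF pd_f] gen_le1[OF pd_f] by auto

lemma phi0_le: "0 \<le> z \<Longrightarrow> z \<le> 1 \<Longrightarrow> 1 - phi 0 z \<le> (1 - z) * m0"
  unfolding phi_def m0_def f0_eq by (rule one_minus_gen_le[OF pd0 sm01])

lemma prod_ge: "0 \<le> (x::real) \<Longrightarrow> x \<le> 1 \<Longrightarrow> 0 \<le> (y::real) \<Longrightarrow> y \<le> 1 \<Longrightarrow> 0 \<le> (w::real) \<Longrightarrow> w \<le> 1 \<Longrightarrow>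
   x * y - w \<ge> - ((1 - x) + (1 - y))"
proof -
  assume "0 \<le> x" "x \<le> 1" "0 \<le> y" "y \<le> 1" "0 \<le> w" "w \<le> 1"
  then have "0 \<le> (1 - x) * (1 - y)" by (metis diff_ge_0_iff_ge mult_nonneg_nonneg)
  then show ?thesis using \<open>w \<le> 1\<close> by (simp add: algebra_simps)
qed

lemma bound_n:
  "0 \<le> s \<Longrightarrow> 0 \<le> z \<Longrightarrow> z \<le> 1 \<Longrightarrow> 1 - phi s z \<le> (1 - z) * m0 * exp (K * s) + (2 * s)^n / fact n"
proof (induction n arbitrary: s z)
  case 0
  have "0 \<le> (1 - z) * m0 * exp (K * s)" using 0 m0_nonneg by simp
  then show ?case using phi_range[OF 0] by simp
next
  case (Suc n)
  note sz = Suc.prems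
  define e where "e u = (2 * u)^(Suc n) / fact (Suc n)" for u :: real
  define d where "d u = (1 - z) * m0 * exp (K * u) + e u - (1 - phi u z)" for u
  have "d 0 \<le> d s"
  proof (rule DERIV_nonneg_imp_increasing_open[OF sz(1)])
    show "continuous_on {0..s} d" unfolding d_def
      unfolding e_def by (intro continuous_intros continuous_on_subset[OF cont_phi[OF sz(2,3)]]) auto
    fix u assume u: "0 < u" "u < s"
    have dp0: "((\<lambda>u. (2 * u)^(Suc n) / fact (Suc n)) has_real_derivative ((1 + of_nat n) * (2 * (2 * u)^n) / fact (Suc n))) (at u)"
      by (intro DERIV_cdivide DERIV_power_Suc) (auto intro!: derivative_eq_intros)
    have "(1 + of_nat n) * (2 * (2 * u)^n) / fact (Suc n) = 2 * (2 * u)^n / (fact n :: real)"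
      by (simp add: fact_Suc divide_simps del: of_nat_Suc)
    with dp0 have dp: "(e has_real_derivative (2 * (2 * u)^n / fact n)) (at u)"
      unfolding e_def by simp
    have "(d has_real_derivative ((1 - z) * m0 * (K * exp (K * u)) + 2 * (2 * u)^n / fact n
             + (phi u (a z) * phi u (b z) - phi u z))) (at u)"
      unfolding d_def
      by (auto intro!: derivative_eq_intros dp deriv_phi[OF sz(2,3)] u simp: algebra_simps)
    moreover have "0 \<le> (1 - z) * m0 * (K * exp (K * u)) + 2 * (2 * u)^n / fact n
             + (phi u (a z) * phi u (b z) - phi u z)"
    proof -
      have ia: "1 - phi u (a z) \<le> (1 - a z) * m0 * exp (K * u) + (2 * u)^n / fact n"
        using Suc.IH[of u "a z"] a_range[OF sz(2,3)] u by auto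
      have ib: "1 - phi u (b z) \<le> (1 - b z) * m0 * exp (K * u) + (2 * u)^n / fact n"
        using Suc.IH[of u "b z"] b_range[OF sz(2,3)] u by auto
      have e0: "0 \<le> m0 * exp (K * u)" using m0_nonneg by simp
      have "(1 - a z) * (m0 * exp (K * u)) \<le> ((1 - z) * mX) * (m0 * exp (K * u))"
        by (rule mult_right_mono[OF a_le[OF sz(2,3)] e0])
      moreover have "(1 - b z) * (m0 * exp (K * u)) \<le> ((1 - z) * mY) * (m0 * exp (K * u))"
        by (rule mult_right_mono[OF b_le[OF sz(2,3)] e0])
      moreover have "phi u (a z) * phi u (b z) - phi u z \<ge> - ((1 - phi u (a z)) + (1 - phi u (b z)))"
        using phi_range[of u "a z"] phi_range[of u "b z"] phi_range[of u z] a_range[OF sz(2,3)] b_range[OF sz(2,3)] u sz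
        by (intro prod_ge) auto
      ultimately show ?thesis using ia ib unfolding K_def by (simp add: algebra_simps)
    qed
    ultimately show "\<exists>y. (d has_real_derivative y) (at u) \<and> 0 \<le> y" by blast
  qed
  moreover have "0 \<le> d 0" unfolding d_def e_def using phi0_le[OF sz(2,3)] by simp
  ultimately show ?case unfolding d_def e_def by simp
qed

lemma pow_fact_lim: "(\<lambda>n. (x::real)^n / fact n) \<longlonglongrightarrow> 0"
proof -
  have "summable (\<lambda>n. inverse (fact n) *\<^sub>R x^n)" by (rule summable_exp_generic)
  then have "(\<lambda>n. inverse (fact n) *\<^sub>R x^n) \<longlonglongrightarrow> 0" by (rule summable_LIMSEQ_zero)
  then show ?thesis by (simp add: divide_inverse mult.commute)
qed

lemma bound1: "0 \<le> s \<Longrightarrow> 0 \<le> z \<Longrightarrow> z \<le> 1 \<Longrightarrow> 1 - phi s z \<le> (1 - z) * (m0 * exp (K * s))"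
proof -
  assume h: "0 \<le> s" "0 \<le> z" "z \<le> 1"
  have "(\<lambda>n. (1 - z) * m0 * exp (K * s) + (2 * s)^n / fact n) \<longlonglongrightarrow> (1 - z) * m0 * exp (K * s) + 0"
    by (intro tendsto_intros pow_fact_lim)
  then have "1 - phi s z \<le> (1 - z) * m0 * exp (K * s) + 0"
    by (rule LIMSEQ_le_const) (use bound_n[OF h] in auto)
  then show ?thesis by (simp add: mult.assoc)
qed

lemma sm_f1: "0 \<le> s \<Longrightarrow> summable (\<lambda>v. real v * f s v)"
  using M1_bound(1)[OF pd_f bound1[unfolded phi_def]] by auto
lemma M1_f_le: "0 \<le> s \<Longrightarrow> M1 (f s) \<le> m0 * exp (K * s)"
  using M1_bound(2)[OF pd_f bound1[unfolded phi_def]] by auto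

end



lemma ode_from_integral:
  fixes y h w :: "real \<Rightarrow> real" and c yi T :: real
  assumes int: "\<And>t. 0 \<le> t \<Longrightarrow> ((\<lambda>s. c * y s + h s) has_integral (y t - yi)) {0..t}"
    and hc: "continuous_on {0..} h"
    and wd: "\<And>t. 0 < t \<Longrightarrow> (w has_real_derivative (c * w t + h t)) (at t)"
    and wc: "continuous_on {0..} w" and w0: "w 0 = yi"
    and T: "0 \<le> T"
  shows "y T = w T"
proof (cases "T = 0")
  case True
  have "((\<lambda>s. c * y s + h s) has_integral 0) {0..0}" using has_integral_refl(2)[of _ "0::real"] by simp
  then have "y 0 - yi = 0" using has_integral_unique[OF int[of 0]] by simp
  then show ?thesis using True w0 by simp
next
  case False
  with T have Tpos: "0 < T" by simp
  define g where "g s = c * y s + h s" for s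
  have gi: "g integrable_on {0..T}" using int[OF T] unfolding g_def by blast
  have yeq: "y t = yi + integral {0..t} g" if "t \<in> {0..T}" for t
    using int[of t] that unfolding g_def by (auto dest: integral_unique)
  have yc: "continuous_on {0..T} y"
  proof -
    have "continuous_on {0..T} (\<lambda>t. yi + integral {0..t} g)"
      by (intro continuous_intros indefinite_integral_continuous_1 gi)
    then show ?thesis by (rule continuous_on_eq) (use yeq in auto)
  qed
  have gc: "continuous_on {0..T} g" unfolding g_def
    by (intro continuous_intros yc continuous_on_subset[OF hc]) auto
  have yd: "(y has_real_derivative g x) (at x)" if x: "0 < x" "x < T" for x
  proof -
    have "((\<lambda>u. integral {0..u} g) has_vector_derivative g x) (at x within {0..T})"
      by (rule integral_has_vector_derivative[OF gc]) (use x in auto)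
    then have "((\<lambda>u. integral {0..u} g) has_vector_derivative g x) (at x)"
      using at_within_Icc_at[of 0 x T] x by simp
    then have "((\<lambda>u. yi + integral {0..u} g) has_vector_derivative 0 + g x) (at x)"
      by (intro has_vector_derivative_add has_vector_derivative_const)
    then have "((\<lambda>u. yi + integral {0..u} g) has_vector_derivative g x) (at x)"
      by simp
    then have "(y has_vector_derivative g x) (at x)"
      by (rule has_vector_derivative_transform_within_open[where S = "{0<..<T}"]) (use x yeq in auto)
    then show ?thesis by (simp add: has_real_derivative_iff_has_vector_derivative)
  qed
  define D where "D t = (y t - w t) * exp (- c * t)" for t
  have "D T = D 0"
  proof (rule DERIV_isconst_end[OF Tpos])
    show "continuous_on {0..T} D" unfolding D_def
      by (intro continuous_intros yc continuous_on_subset[OF wc]) auto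
    fix x assume x: "0 < x" "x < T"
    have dy: "(y has_real_derivative g x) (at x)" using yd x by simp
    have dw: "(w has_real_derivative (c * w x + h x)) (at x)" using wd x by simp
    have d1: "((\<lambda>t. y t - w t) has_real_derivative (g x - (c * w x + h x))) (at x)"
      by (rule DERIV_diff[OF dy dw])
    have d2: "((\<lambda>t. exp (- c * t)) has_real_derivative (exp (- c * x) * (- c))) (at x)"
      by (rule DERIV_fun_exp) (rule derivative_eq_intros refl | simp)+
    have "(D has_real_derivative ((g x - (c * w x + h x)) * exp (- c * x) + (exp (- c * x) * (- c)) * (y x - w x))) (at x)"
      unfolding D_def by (rule DERIV_mult[OF d1 d2])
    moreover have "(g x - (c * w x + h x)) * exp (- c * x) + (exp (- c * x) * (- c)) * (y x - w x) = 0"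
      unfolding g_def by (simp add: algebra_simps)
    ultimately show "(D has_real_derivative 0) (at x)" by simp
  qed
  moreover have "y 0 = yi" using yeq[of 0] Tpos by simp
  ultimately show ?thesis unfolding D_def using w0 by simp
qed

context kin
begin

definition "M s = M1 (f s)"
definition "alpha1 = mX + mY - 1"
definition "A1 z = G1 (pmf pX) z"
definition "B1 z = G1 (pmf pY) z"
definition "zs n = 1 - 1 / (real n + 2)"

lemma zs_range: "0 \<le> zs n" "zs n < 1"
  unfolding zs_def by (auto simp: field_simps)
lemma zs_lim: "zs \<longlonglongrightarrow> 1"
proof -
  have "(\<lambda>n. 1 / (real n + 2)) \<longlonglongrightarrow> 0"
    using LIMSEQ_ignore_initial_segment[OF lim_const_over_n[of 1], of 2]
    by (simp add: add.commute)
  then have "(\<lambda>n. 1 - 1 / (real n + 2)) \<longlonglongrightarrow> 1 - 0" by (intro tendsto_intros)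
  then show ?thesis unfolding zs_def by simp
qed

lemma cont_lim:
  fixes F :: "real \<Rightarrow> real" and x :: "nat \<Rightarrow> real"
  assumes "continuous_on {0..1} F" "\<And>n. x n \<in> {0..1}" "x \<longlonglongrightarrow> 1"
  shows "(\<lambda>n. F (x n)) \<longlonglongrightarrow> F 1"
proof -
  have "continuous (at 1 within {0..1}) F" using assms(1) by (simp add: continuous_on_eq_continuous_within)
  then show ?thesis by (rule continuous_within_tendsto_compose') (use assms in auto)
qed

lemma M_nonneg: "0 \<le> s \<Longrightarrow> 0 \<le> M s"
  unfolding M_def by (rule M1_nonneg[OF pd_f sm_f1])

lemma A1_lim: "(\<lambda>n. A1 (zs n)) \<longlonglongrightarrow> mX"
  unfolding A1_def mX_def G1_one[OF pdX smX1, symmetric]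
  by (rule cont_lim[OF G1_cont[OF pdX smX1]]) (use zs_range zs_lim in \<open>auto simp: less_imp_le\<close>)
lemma B1_lim: "(\<lambda>n. B1 (zs n)) \<longlonglongrightarrow> mY"
  unfolding B1_def mY_def G1_one[OF pdY smY1, symmetric]
  by (rule cont_lim[OF G1_cont[OF pdY smY1]]) (use zs_range zs_lim in \<open>auto simp: less_imp_le\<close>)

lemma a_eq: "0 \<le> z \<Longrightarrow> z \<le> 1 \<Longrightarrow> a z = 1 - (1 - z) * A1 z"
  unfolding a_def A1_def using one_minus_gen_G1'[OF pdX smX1] by (simp add: algebra_simps)
lemma b_eq: "0 \<le> z \<Longrightarrow> z \<le> 1 \<Longrightarrow> b z = 1 - (1 - z) * B1 z"
  unfolding b_def B1_def using one_minus_gen_G1'[OF pdY smY1] by (simp add: algebra_simps)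

lemma a_lim: "(\<lambda>n. a (zs n)) \<longlonglongrightarrow> 1"
proof -
  have "(\<lambda>n. 1 - (1 - zs n) * A1 (zs n)) \<longlonglongrightarrow> 1 - (1 - 1) * mX"
    by (intro tendsto_intros zs_lim A1_lim)
  then show ?thesis using a_eq zs_range by (simp add: less_imp_le)
qed
lemma b_lim: "(\<lambda>n. b (zs n)) \<longlonglongrightarrow> 1"
proof -
  have "(\<lambda>n. 1 - (1 - zs n) * B1 (zs n)) \<longlonglongrightarrow> 1 - (1 - 1) * mY"
    by (intro tendsto_intros zs_lim B1_lim)
  then show ?thesis using b_eq zs_range by (simp add: less_imp_le)
qed

lemma A1_range: "0 \<le> z \<Longrightarrow> z \<le> 1 \<Longrightarrow> 0 \<le> A1 z \<and> A1 z \<le> mX"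
  unfolding A1_def mX_def using G1_ge[OF pdX smX1] G1_le[OF pdX smX1] by auto
lemma B1_range: "0 \<le> z \<Longrightarrow> z \<le> 1 \<Longrightarrow> 0 \<le> B1 z \<and> B1 z \<le> mY"
  unfolding B1_def mY_def using G1_ge[OF pdY smY1] G1_le[OF pdY smY1] by auto

lemma G1f_lim: "0 \<le> s \<Longrightarrow> (\<And>n. x n \<in> {0..1}) \<Longrightarrow> x \<longlonglongrightarrow> 1 \<Longrightarrow> (\<lambda>n. G1 (f s) (x n)) \<longlonglongrightarrow> M s"
  unfolding M_def G1_one[OF pd_f sm_f1, symmetric]
  by (rule cont_lim[OF G1_cont[OF pd_f sm_f1]])

lemma G1f_range: "0 \<le> s \<Longrightarrow> 0 \<le> z \<Longrightarrow> z \<le> 1 \<Longrightarrow> 0 \<le> G1 (f s) z \<and> G1 (f s) z \<le> M s"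
  unfolding M_def using G1_ge[OF pd_f sm_f1] G1_le[OF pd_f sm_f1] by auto

lemma phi_G1: "0 \<le> s \<Longrightarrow> 0 \<le> z \<Longrightarrow> z \<le> 1 \<Longrightarrow> 1 - phi s z = (1 - z) * G1 (f s) z"
  unfolding phi_def by (rule one_minus_gen_G1'[OF pd_f sm_f1])

lemma M_le: "0 \<le> s \<Longrightarrow> s \<le> t \<Longrightarrow> M s \<le> m0 * exp (K * t)"
proof -
  assume st: "0 \<le> s" "s \<le> t"
  have "M s \<le> m0 * exp (K * s)" unfolding M_def by (rule M1_f_le[OF st(1)])
  also have "\<dots> \<le> m0 * exp (K * t)"
    using st K_nonneg m0_nonneg by (intro mult_left_mono) (auto intro!: mult_left_mono)
  finally show ?thesis .
qed

lemma phi_integral: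
  assumes z: "0 \<le> z" "z \<le> 1" and t: "0 \<le> t"
  shows "((\<lambda>s. phi s (a z) * phi s (b z) - phi s z) has_integral (phi t z - phi 0 z)) {0..t}"
proof (rule fundamental_theorem_of_calculus_interior[OF t])
  show "continuous_on {0..t} (\<lambda>s. phi s z)"
    by (rule continuous_on_subset[OF cont_phi[OF z]]) auto
  fix x assume "x \<in> {0<..<t}"
  then show "((\<lambda>s. phi s z) has_vector_derivative phi x (a z) * phi x (b z) - phi x z) (at x)"
    using deriv_phi[OF z] by (simp add: has_real_derivative_iff_has_vector_derivative)
qed

definition "kern1 z s = A1 z * G1 (f s) (a z) + B1 z * G1 (f s) (b z)
   - (1 - z) * A1 z * B1 z * G1 (f s) (a z) * G1 (f s) (b z) - G1 (f s) z"

lemma kern1_eq: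
  assumes z: "0 \<le> z" "z < 1" and s: "0 \<le> s"
  shows "- (phi s (a z) * phi s (b z) - phi s z) / (1 - z) = kern1 z s"
proof -
  have za: "0 \<le> a z" "a z \<le> 1" using a_range z by auto
  have zb: "0 \<le> b z" "b z \<le> 1" using b_range z by auto
  have ea: "1 - a z = (1 - z) * A1 z" using a_eq[of z] z by simp
  have eb: "1 - b z = (1 - z) * B1 z" using b_eq[of z] z by simp
  have "phi s (a z) = 1 - (1 - a z) * G1 (f s) (a z)" using phi_G1[OF s za] by linarith
  also have "\<dots> = 1 - (1 - z) * (A1 z * G1 (f s) (a z))" by (simp only: ea mult.assoc)
  finally have ha: "phi s (a z) = 1 - (1 - z) * (A1 z * G1 (f s) (a z))" .
  have "phi s (b z) = 1 - (1 - b z) * G1 (f s) (b z)" using phi_G1[OF s zb] by linarith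
  also have "\<dots> = 1 - (1 - z) * (B1 z * G1 (f s) (b z))" by (simp only: eb mult.assoc)
  finally have hb: "phi s (b z) = 1 - (1 - z) * (B1 z * G1 (f s) (b z))" .
  have hz: "phi s z = 1 - (1 - z) * G1 (f s) z"
    using phi_G1[OF s] z by (simp add: algebra_simps)
  show ?thesis unfolding kern1_def ha hb hz using z
    by (simp add: field_simps)
qed

lemma M_integral:
  assumes t: "0 \<le> t"
  shows "((\<lambda>s. alpha1 * M s) has_integral (M t - m0)) {0..t}"
proof (rule has_integral_dominated_convergence)
  define Mb where "Mb = m0 * exp (K * t)"
  show "(kern1 (zs n) has_integral (G1 (f t) (zs n) - G1 (f 0) (zs n))) {0..t}" for n
  proof -
    have z: "0 \<le> zs n" "zs n \<le> 1" using zs_range[of n] by auto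
    have "((\<lambda>s. - (phi s (a (zs n)) * phi s (b (zs n)) - phi s (zs n)) / (1 - zs n)) has_integral
          (- (phi t (zs n) - phi 0 (zs n)) / (1 - zs n))) {0..t}"
      by (intro has_integral_divide has_integral_neg phi_integral z t)
    moreover have "- (phi t (zs n) - phi 0 (zs n)) / (1 - zs n) = G1 (f t) (zs n) - G1 (f 0) (zs n)"
      using phi_G1[OF t z] phi_G1[of 0, OF _ z] zs_range[of n] by (simp add: field_simps)
    ultimately have hi: "((\<lambda>s. - (phi s (a (zs n)) * phi s (b (zs n)) - phi s (zs n)) / (1 - zs n)) has_integral
          (G1 (f t) (zs n) - G1 (f 0) (zs n))) {0..t}" by simp
    show ?thesis
    proof (rule has_integral_eq[OF _ hi])
      fix x assume "x \<in> {0..t}"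
      then show "- (phi x (a (zs n)) * phi x (b (zs n)) - phi x (zs n)) / (1 - zs n) = kern1 (zs n) x"
        using kern1_eq zs_range by auto
    qed
  qed
  show "(\<lambda>_. (mX + mY + mX * mY * Mb + 1) * Mb) integrable_on {0..t}" by (rule integrable_const_ivl)
  show "\<forall>s\<in>{0..t}. norm (kern1 (zs n) s) \<le> (mX + mY + mX * mY * Mb + 1) * Mb" for n
  proof
    fix s assume s: "s \<in> {0..t}"
    define z where "z = zs n"
    have z: "0 \<le> z" "z \<le> 1" using zs_range[of n] unfolding z_def by auto
    have za: "0 \<le> a z" "a z \<le> 1" using a_range z by auto
    have zb: "0 \<le> b z" "b z \<le> 1" using b_range z by auto
    have s0: "0 \<le> s" using s by auto
    have Ms: "M s \<le> Mb" unfolding Mb_def using M_le s by auto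
    define ga where "ga = G1 (f s) (a z)"
    define gb where "gb = G1 (f s) (b z)"
    define gz where "gz = G1 (f s) z"
    have ga: "0 \<le> ga" "ga \<le> Mb" using G1f_range[OF s0 za] Ms unfolding ga_def by auto
    have gb: "0 \<le> gb" "gb \<le> Mb" using G1f_range[OF s0 zb] Ms unfolding gb_def by auto
    have gz: "0 \<le> gz" "gz \<le> Mb" using G1f_range[OF s0 z] Ms unfolding gz_def by auto
    have A: "0 \<le> A1 z" "A1 z \<le> mX" using A1_range[OF z] by auto
    have B: "0 \<le> B1 z" "B1 z \<le> mY" using B1_range[OF z] by auto
    have p1: "0 \<le> A1 z * ga" "A1 z * ga \<le> mX * Mb" using A ga by (auto intro: mult_mono)
    have p2: "0 \<le> B1 z * gb" "B1 z * gb \<le> mY * Mb" using B gb by (auto intro: mult_mono)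
    have p3: "0 \<le> (A1 z * ga) * (B1 z * gb)" "(A1 z * ga) * (B1 z * gb) \<le> (mX * Mb) * (mY * Mb)"
      using p1 p2 by (auto intro: mult_mono)
    have p4: "0 \<le> (1 - z) * ((A1 z * ga) * (B1 z * gb))" "(1 - z) * ((A1 z * ga) * (B1 z * gb)) \<le> (A1 z * ga) * (B1 z * gb)"
      using p3 z by (auto intro: mult_left_le_one_le)
    have k: "kern1 z s = A1 z * ga + B1 z * gb - (1 - z) * ((A1 z * ga) * (B1 z * gb)) - gz"
      unfolding kern1_def ga_def gb_def gz_def by (simp add: algebra_simps)
    have "\<bar>kern1 z s\<bar> \<le> mX * Mb + mY * Mb + (mX * Mb) * (mY * Mb) + Mb"
      unfolding k using p1 p2 p3 p4 gz by linarith
    then show "norm (kern1 (zs n) s) \<le> (mX + mY + mX * mY * Mb + 1) * Mb"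
      unfolding z_def by (simp add: algebra_simps)
  qed
  show "\<forall>s\<in>{0..t}. (\<lambda>n. kern1 (zs n) s) \<longlonglongrightarrow> alpha1 * M s"
  proof
    fix s assume s: "s \<in> {0..t}"
    have zr: "\<And>n. zs n \<in> {0..1}" "\<And>n. a (zs n) \<in> {0..1}" "\<And>n. b (zs n) \<in> {0..1}"
      using zs_range a_range b_range by (auto simp: less_imp_le)
    have "(\<lambda>n. kern1 (zs n) s) \<longlonglongrightarrow> mX * M s + mY * M s - (1 - 1) * mX * mY * M s * M s - M s"
      unfolding kern1_def
      by (intro tendsto_intros A1_lim B1_lim zs_lim G1f_lim a_lim b_lim zr) (use s in auto)
    then show "(\<lambda>n. kern1 (zs n) s) \<longlonglongrightarrow> alpha1 * M s" by (simp add: alpha1_def algebra_simps)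
  qed
  show "(\<lambda>n. G1 (f t) (zs n) - G1 (f 0) (zs n)) \<longlonglongrightarrow> M t - m0"
  proof -
    have zr: "\<And>n. zs n \<in> {0..1}" using zs_range by (auto simp: less_imp_le)
    have "(\<lambda>n. G1 (f t) (zs n) - G1 (f 0) (zs n)) \<longlonglongrightarrow> M t - M 0"
      by (intro tendsto_intros G1f_lim zr zs_lim t) auto
    then show ?thesis unfolding M_def m0_def f0_eq .
  qed
qed

end



context kin
begin

lemma M_exp: "0 \<le> t \<Longrightarrow> M t = m0 * exp (alpha1 * t)"
proof (rule ode_from_integral[where c = alpha1 and h = "\<lambda>_. 0" and yi = m0 and y = M and w = "\<lambda>t. m0 * exp (alpha1 * t)" and T = t])
  show "((\<lambda>s. alpha1 * M s + 0) has_integral (M t - m0)) {0..t}" if "0 \<le> t" for t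
    using M_integral[OF that] by simp
  show "((\<lambda>t. m0 * exp (alpha1 * t)) has_real_derivative alpha1 * (m0 * exp (alpha1 * t)) + 0) (at t)" if "0 < t" for t
    by (auto intro!: derivative_eq_intros)
qed (auto intro!: continuous_intros)

definition "qX = G2 (pmf pX) 1"
definition "qY = G2 (pmf pY) 1"
definition "N0 = G2 f0 1"
definition "lam = mX^2 + mY^2 + 1"
definition "Mb T = m0 * exp (K * T)"
definition "P0 T = N0 + (qX + qY) * Mb T + mX * mY * (Mb T)^2"
definition "PP T s = P0 T * exp (lam * s)"
definition "J s z = (1 - z) * (m0 * exp (alpha1 * s)) - (1 - phi s z)"

lemma qX_nonneg: "0 \<le> qX" unfolding qX_def by (rule G2_ge[OF pdX smX]) auto
lemma qY_nonneg: "0 \<le> qY" unfolding qY_def by (rule G2_ge[OF pdY smY]) auto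
lemma N0_nonneg: "0 \<le> N0" unfolding N0_def by (rule G2_ge[OF pd0 sm0]) auto
lemma Mb_nonneg: "0 \<le> Mb T" unfolding Mb_def using m0_nonneg by simp
lemma P0_nonneg: "0 \<le> P0 T" unfolding P0_def
  using N0_nonneg qX_nonneg qY_nonneg Mb_nonneg[of T] mX_nonneg mY_nonneg by simp
lemma P0_le_PP: "0 \<le> s \<Longrightarrow> P0 T \<le> PP T s"
  unfolding PP_def using P0_nonneg[of T] lam_def
  by (simp add: mult_le_cancel_left1 lam_def add_nonneg_pos)

lemma J_eq: "0 \<le> s \<Longrightarrow> J s z = (1 - z) * M s - (1 - phi s z)"
  unfolding J_def M_exp by simp

lemma J_nonneg: "0 \<le> s \<Longrightarrow> 0 \<le> z \<Longrightarrow> z \<le> 1 \<Longrightarrow> 0 \<le> J s z"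
  unfolding J_eq M_def phi_def using one_minus_gen_le[OF pd_f sm_f1] by simp

lemma H_le: "0 \<le> s \<Longrightarrow> 0 \<le> z \<Longrightarrow> z \<le> 1 \<Longrightarrow> 1 - phi s z \<le> (1 - z) * M s"
  unfolding M_def phi_def using one_minus_gen_le[OF pd_f sm_f1] by simp

lemma JX_eq: "0 \<le> z \<Longrightarrow> z \<le> 1 \<Longrightarrow> (1 - z) * mX - (1 - a z) = (1 - z)^2 * G2 (pmf pX) z"
  unfolding mX_def a_def by (rule J_G2[OF pdX smX])
lemma JY_eq: "0 \<le> z \<Longrightarrow> z \<le> 1 \<Longrightarrow> (1 - z) * mY - (1 - b z) = (1 - z)^2 * G2 (pmf pY) z"
  unfolding mY_def b_def by (rule J_G2[OF pdY smY])

lemma GX_range: "0 \<le> z \<Longrightarrow> z \<le> 1 \<Longrightarrow> 0 \<le> G2 (pmf pX) z \<and> G2 (pmf pX) z \<le> qX"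
  unfolding qX_def using G2_ge[OF pdX smX] G2_le[OF pdX smX] by auto
lemma GY_range: "0 \<le> z \<Longrightarrow> z \<le> 1 \<Longrightarrow> 0 \<le> G2 (pmf pY) z \<and> G2 (pmf pY) z \<le> qY"
  unfolding qY_def using G2_ge[OF pdY smY] G2_le[OF pdY smY] by auto

lemma J0_le: "0 \<le> z \<Longrightarrow> z \<le> 1 \<Longrightarrow> J 0 z \<le> (1 - z)^2 * N0"
proof -
  assume z: "0 \<le> z" "z \<le> 1"
  have "J 0 z = (1 - z)^2 * G2 f0 z"
    unfolding J_def phi_def f0_eq using J_G2[OF pd0 sm0 z] m0_def by simp
  also have "\<dots> \<le> (1 - z)^2 * N0" unfolding N0_def
    by (intro mult_left_mono G2_le[OF pd0 sm0 z]) auto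
  finally show ?thesis .
qed

lemma Jderiv_alg:
  fixes z a b M mX mY phia phib phiz Ja Jb Jz :: real
  assumes "Ja = (1 - a) * M - (1 - phia)" "Jb = (1 - b) * M - (1 - phib)" "Jz = (1 - z) * M - (1 - phiz)"
  shows "(1 - z) * (mX + mY - 1) * M + (phia * phib - phiz)
    = ((1 - z) * mX - (1 - a)) * M + ((1 - z) * mY - (1 - b)) * M + Ja + Jb + (1 - phia) * (1 - phib) - Jz"
  using assms by (simp add: algebra_simps)

lemma J_bound_n:
  assumes T: "0 \<le> T"
  shows "0 \<le> s \<Longrightarrow> s \<le> T \<Longrightarrow> 0 \<le> z \<Longrightarrow> z \<le> 1 \<Longrightarrow> J s z \<le> (1 - z)^2 * PP T s + Mb T * ((2 * s)^n / fact n)"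
proof (induction n arbitrary: s z)
  case 0
  have "J s z \<le> (1 - z) * M s" unfolding J_eq[OF 0(1)] using phi_range[of s z] 0 by simp
  also have "\<dots> \<le> 1 * Mb T"
    using M_le[of s T] M_nonneg[of s] 0 unfolding Mb_def by (intro mult_mono) auto
  finally have "J s z \<le> Mb T" by simp
  moreover have "0 \<le> (1 - z)^2 * PP T s" unfolding PP_def using P0_nonneg[of T] by simp
  ultimately show ?case by simp
next
  case (Suc n)
  note sz = Suc.prems
  have z: "0 \<le> z" "z \<le> 1" using sz by auto
  define e where "e u = (2 * u)^(Suc n) / fact (Suc n)" for u :: real
  define d where "d u = (1 - z)^2 * PP T u + Mb T * e u - J u z" for u
  have "d 0 \<le> d s"
  proof (rule DERIV_nonneg_imp_increasing_open[OF sz(1)])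
    show "continuous_on {0..s} d" unfolding d_def e_def J_def PP_def
      by (intro continuous_intros continuous_on_subset[OF cont_phi[OF z]]) auto
    fix u assume u: "0 < u" "u < s"
    have u0: "0 \<le> u" "u \<le> T" using u sz by auto
    have dp0: "((\<lambda>u. (2 * u)^(Suc n) / fact (Suc n)) has_real_derivative ((1 + of_nat n) * (2 * (2 * u)^n) / fact (Suc n))) (at u)"
      by (intro DERIV_cdivide DERIV_power_Suc) (auto intro!: derivative_eq_intros)
    have "(1 + of_nat n) * (2 * (2 * u)^n) / fact (Suc n) = 2 * (2 * u)^n / (fact n :: real)"
      by (simp add: fact_Suc divide_simps del: of_nat_Suc)
    with dp0 have dp: "(e has_real_derivative (2 * (2 * u)^n / fact n)) (at u)"
      unfolding e_def by simp
    have e1: "((\<lambda>u. m0 * exp (alpha1 * u)) has_real_derivative m0 * (exp (alpha1 * u) * alpha1)) (at u)"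
      by (auto intro!: derivative_eq_intros)
    have dJ: "((\<lambda>u. J u z) has_real_derivative ((1 - z) * (m0 * (exp (alpha1 * u) * alpha1)) - (0 - (phi u (a z) * phi u (b z) - phi u z)))) (at u)"
      unfolding J_def by (rule DERIV_diff[OF DERIV_cmult[OF e1] DERIV_diff[OF DERIV_const deriv_phi[OF z u(1)]]])
    have dP: "((\<lambda>u. (1 - z)^2 * PP T u) has_real_derivative (1 - z)^2 * (P0 T * (exp (lam * u) * lam))) (at u)"
      unfolding PP_def by (auto intro!: derivative_eq_intros)
    have dd: "(d has_real_derivative ((1 - z)^2 * (P0 T * (exp (lam * u) * lam)) + Mb T * (2 * (2 * u)^n / fact n)
        - ((1 - z) * (m0 * (exp (alpha1 * u) * alpha1)) - (0 - (phi u (a z) * phi u (b z) - phi u z))))) (at u)"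
      unfolding d_def by (intro DERIV_diff DERIV_add dP DERIV_cmult dp dJ)
    have nonneg: "(1 - z) * (m0 * (exp (alpha1 * u) * alpha1)) + (phi u (a z) * phi u (b z) - phi u z)
        \<le> (1 - z)^2 * (P0 T * (exp (lam * u) * lam)) + Mb T * (2 * (2 * u)^n / fact n)"
    proof -
      have za: "0 \<le> a z" "a z \<le> 1" using a_range[OF z] by auto
      have zb: "0 \<le> b z" "b z \<le> 1" using b_range[OF z] by auto
      define Mu where "Mu = M u"
      have Mu: "0 \<le> Mu" "Mu \<le> Mb T" unfolding Mu_def Mb_def using M_nonneg[of u] M_le[of u T] u0 by auto
      have MuE: "m0 * exp (alpha1 * u) = Mu" unfolding Mu_def using M_exp[of u] u0 by simp
      define Ja Jb Jz where "Ja = J u (a z)" and "Jb = J u (b z)" and "Jz = J u z"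
      have alg: "(1 - z) * (mX + mY - 1) * Mu + (phi u (a z) * phi u (b z) - phi u z)
        = ((1 - z) * mX - (1 - a z)) * Mu + ((1 - z) * mY - (1 - b z)) * Mu + Ja + Jb
           + (1 - phi u (a z)) * (1 - phi u (b z)) - Jz"
        by (rule Jderiv_alg) (simp_all add: Ja_def Jb_def Jz_def J_eq[OF u0(1)] Mu_def)
      define e0 where "e0 = Mb T * ((2 * u)^n / fact n)"
      have IHa: "Ja \<le> (1 - a z)^2 * PP T u + e0"
        unfolding Ja_def e0_def using Suc.IH[of u "a z"] u0 za by auto
      have IHb: "Jb \<le> (1 - b z)^2 * PP T u + e0"
        unfolding Jb_def e0_def using Suc.IH[of u "b z"] u0 zb by auto
      have PPn: "0 \<le> PP T u" unfolding PP_def using P0_nonneg[of T] by simp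
      have aX: "0 \<le> 1 - a z" "1 - a z \<le> (1 - z) * mX" using za a_le[OF z] by auto
      have bY: "0 \<le> 1 - b z" "1 - b z \<le> (1 - z) * mY" using zb b_le[OF z] by auto
      have sa: "(1 - a z)^2 \<le> (1 - z)^2 * mX^2"
        using power_mono[OF aX(2) aX(1), of 2] by (simp add: power_mult_distrib)
      have sb: "(1 - b z)^2 \<le> (1 - z)^2 * mY^2"
        using power_mono[OF bY(2) bY(1), of 2] by (simp add: power_mult_distrib)
      have t1: "((1 - z) * mX - (1 - a z)) * Mu \<le> ((1 - z)^2 * qX) * Mb T"
        unfolding JX_eq[OF z] using GX_range[OF z] Mu z
        by (intro mult_mono mult_left_mono) auto
      have t2: "((1 - z) * mY - (1 - b z)) * Mu \<le> ((1 - z)^2 * qY) * Mb T"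
        unfolding JY_eq[OF z] using GY_range[OF z] Mu z
        by (intro mult_mono mult_left_mono) auto
      have t3: "(1 - a z)^2 * PP T u \<le> ((1 - z)^2 * mX^2) * PP T u" by (rule mult_right_mono[OF sa PPn])
      have t4: "(1 - b z)^2 * PP T u \<le> ((1 - z)^2 * mY^2) * PP T u" by (rule mult_right_mono[OF sb PPn])
      have Ha: "0 \<le> 1 - phi u (a z)" "1 - phi u (a z) \<le> ((1 - z) * mX) * Mb T"
      proof -
        show "0 \<le> 1 - phi u (a z)" using phi_range[OF u0(1) za] by simp
        have "1 - phi u (a z) \<le> (1 - a z) * M u" by (rule H_le[OF u0(1) za])
        also have "\<dots> \<le> ((1 - z) * mX) * Mb T" using aX Mu unfolding Mu_def by (intro mult_mono) auto
        finally show "1 - phi u (a z) \<le> ((1 - z) * mX) * Mb T" .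
      qed
      have Hb: "0 \<le> 1 - phi u (b z)" "1 - phi u (b z) \<le> ((1 - z) * mY) * Mb T"
      proof -
        show "0 \<le> 1 - phi u (b z)" using phi_range[OF u0(1) zb] by simp
        have "1 - phi u (b z) \<le> (1 - b z) * M u" by (rule H_le[OF u0(1) zb])
        also have "\<dots> \<le> ((1 - z) * mY) * Mb T" using bY Mu unfolding Mu_def by (intro mult_mono) auto
        finally show "1 - phi u (b z) \<le> ((1 - z) * mY) * Mb T" .
      qed
      have t5: "(1 - phi u (a z)) * (1 - phi u (b z)) \<le> (((1 - z) * mX) * Mb T) * (((1 - z) * mY) * Mb T)"
        by (rule mult_mono[OF Ha(2) Hb(2)]) (use Ha Hb in auto)
      have Jz0: "0 \<le> Jz" unfolding Jz_def by (rule J_nonneg[OF u0(1) z])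
      have P0le: "P0 T \<le> PP T u" using P0_le_PP[OF u0(1)] .
      have big: "(1 - z) * (mX + mY - 1) * Mu + (phi u (a z) * phi u (b z) - phi u z)
         \<le> (1 - z)^2 * ((qX + qY) * Mb T + mX * mY * (Mb T)^2 + (mX^2 + mY^2) * PP T u) + 2 * e0"
        unfolding alg using t1 t2 t3 t4 t5 IHa IHb Jz0
        by (simp add: algebra_simps power2_eq_square) 
      have "(1 - z)^2 * ((qX + qY) * Mb T + mX * mY * (Mb T)^2 + (mX^2 + mY^2) * PP T u)
          \<le> (1 - z)^2 * (P0 T * (exp (lam * u) * lam))"
      proof (rule mult_left_mono)
        have "(qX + qY) * Mb T + mX * mY * (Mb T)^2 \<le> P0 T" unfolding P0_def using N0_nonneg by simp
        also have "\<dots> \<le> PP T u" by (rule P0le)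
        finally have "(qX + qY) * Mb T + mX * mY * (Mb T)^2 + (mX^2 + mY^2) * PP T u \<le> lam * PP T u"
          unfolding lam_def by (simp add: algebra_simps)
        then show "(qX + qY) * Mb T + mX * mY * (Mb T)^2 + (mX^2 + mY^2) * PP T u \<le> P0 T * (exp (lam * u) * lam)"
          unfolding PP_def by (simp add: algebra_simps)
      qed simp
      moreover have "2 * e0 = Mb T * (2 * (2 * u)^n / fact n)" unfolding e0_def by simp
      moreover have "(1 - z) * (m0 * (exp (alpha1 * u) * alpha1)) = (1 - z) * (mX + mY - 1) * Mu"
        unfolding MuE[symmetric] alpha1_def by (simp add: algebra_simps)
      ultimately show ?thesis using big by linarith
    qed
    show "\<exists>y. (d has_real_derivative y) (at u) \<and> 0 \<le> y"
      using dd nonneg by (intro exI[of _ "(1 - z)^2 * (P0 T * (exp (lam * u) * lam)) + Mb T * (2 * (2 * u)^n / fact n)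
        - ((1 - z) * (m0 * (exp (alpha1 * u) * alpha1)) - (0 - (phi u (a z) * phi u (b z) - phi u z)))"]) auto
  qed
  moreover have "0 \<le> d 0"
  proof -
    have "J 0 z \<le> (1 - z)^2 * N0" by (rule J0_le[OF z])
    also have "\<dots> \<le> (1 - z)^2 * PP T 0" using P0_le_PP[of 0 T] unfolding P0_def PP_def
      using qX_nonneg qY_nonneg Mb_nonneg[of T] mX_nonneg mY_nonneg
      by (intro mult_left_mono) auto
    finally show ?thesis unfolding d_def e_def by simp
  qed
  ultimately show ?case unfolding d_def e_def by simp
qed

end



context kin
begin

lemma J_bound:
  assumes "0 \<le> s" "s \<le> T" "0 \<le> z" "z \<le> 1"
  shows "J s z \<le> (1 - z)^2 * PP T s"
proof -
  have T: "0 \<le> T" using assms by simp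
  have "(\<lambda>n. (1 - z)^2 * PP T s + Mb T * ((2 * s)^n / fact n)) \<longlonglongrightarrow> (1 - z)^2 * PP T s + Mb T * 0"
    by (intro tendsto_intros pow_fact_lim)
  then have "J s z \<le> (1 - z)^2 * PP T s + Mb T * 0"
    by (rule LIMSEQ_le_const) (use J_bound_n[OF T assms] in auto)
  then show ?thesis by simp
qed

lemma sm_f2: "0 \<le> s \<Longrightarrow> summable (\<lambda>v. (real v)^2 * f s v)"
proof -
  assume s: "0 \<le> s"
  show ?thesis
  proof (rule M2_bound(1)[OF pd_f[OF s] sm_f1[OF s]])
    fix z :: real assume z: "0 \<le> z" "z < 1"
    show "(1 - z) * M1 (f s) - (1 - gen_fun (f s) z) \<le> (1 - z)^2 * PP s s"
      using J_bound[OF s order_refl z(1)] z J_eq[OF s] unfolding M_def phi_def by simp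
  qed
qed

definition "N s = G2 (f s) 1"
definition "alpha2 = mX^2 + mY^2 - 1"
definition "GX z = G2 (pmf pX) z"
definition "GY z = G2 (pmf pY) z"

lemma PP_mono: "s \<le> T \<Longrightarrow> PP T s \<le> PP T T"
proof -
  assume st: "s \<le> T"
  have "0 \<le> lam" unfolding lam_def by (simp add: add_nonneg_nonneg)
  then have "lam * s \<le> lam * T" using st by (rule mult_left_mono[rotated])
  then show ?thesis unfolding PP_def using P0_nonneg[of T] by (intro mult_left_mono) auto
qed

lemma G2f_range: "0 \<le> s \<Longrightarrow> s \<le> T \<Longrightarrow> 0 \<le> z \<Longrightarrow> z \<le> 1 \<Longrightarrow> 0 \<le> G2 (f s) z \<and> G2 (f s) z \<le> PP T T"
proof -
  assume h: "0 \<le> s" "s \<le> T" "0 \<le> z" "z \<le> 1"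
  have "M2 (f s) - M1 (f s) \<le> 2 * PP T s"
  proof (rule M2_bound(2)[OF pd_f[OF h(1)] sm_f1[OF h(1)]])
    fix z :: real assume z: "0 \<le> z" "z < 1"
    show "(1 - z) * M1 (f s) - (1 - gen_fun (f s) z) \<le> (1 - z)^2 * PP T s"
      using J_bound[OF h(1,2) z(1)] z J_eq[OF h(1)] unfolding M_def phi_def by simp
  qed
  then have "G2 (f s) 1 \<le> PP T s" using G2_one[OF pd_f[OF h(1)] sm_f2[OF h(1)]] by simp
  then show ?thesis using G2_ge[OF pd_f[OF h(1)] sm_f2[OF h(1)] h(3,4)] G2_le[OF pd_f[OF h(1)] sm_f2[OF h(1)] h(3,4)]
    PP_mono[OF h(2)] by auto
qed

lemma J_G2f: "0 \<le> s \<Longrightarrow> 0 \<le> z \<Longrightarrow> z \<le> 1 \<Longrightarrow> J s z = (1 - z)^2 * G2 (f s) z"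
  using J_G2[OF pd_f sm_f2] J_eq unfolding M_def phi_def by simp

lemma G2f_lim: "0 \<le> s \<Longrightarrow> (\<And>n. x n \<in> {0..1}) \<Longrightarrow> x \<longlonglongrightarrow> 1 \<Longrightarrow> (\<lambda>n. G2 (f s) (x n)) \<longlonglongrightarrow> N s"
  unfolding N_def by (rule cont_lim[OF G2_cont[OF pd_f sm_f2]])

lemma GX_lim: "(\<lambda>n. GX (zs n)) \<longlonglongrightarrow> qX"
  unfolding GX_def qX_def
  by (rule cont_lim[OF G2_cont[OF pdX smX]]) (use zs_range zs_lim in \<open>auto simp: less_imp_le\<close>)
lemma GY_lim: "(\<lambda>n. GY (zs n)) \<longlonglongrightarrow> qY"
  unfolding GY_def qY_def
  by (rule cont_lim[OF G2_cont[OF pdY smY]]) (use zs_range zs_lim in \<open>auto simp: less_imp_le\<close>)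

definition "kern2 z s = GX z * M s + GY z * M s + (A1 z)^2 * G2 (f s) (a z) + (B1 z)^2 * G2 (f s) (b z)
   + A1 z * B1 z * G1 (f s) (a z) * G1 (f s) (b z) - G2 (f s) z"

lemma kern2_eq:
  assumes z: "0 \<le> z" "z < 1" and s: "0 \<le> s"
  shows "((1 - z) * (M s * alpha1) + (phi s (a z) * phi s (b z) - phi s z)) / (1 - z)^2 = kern2 z s"
proof -
  have z1: "z \<le> 1" using z by simp
  have za: "0 \<le> a z" "a z \<le> 1" using a_range z1 z by auto
  have zb: "0 \<le> b z" "b z \<le> 1" using b_range z1 z by auto
  have ea: "1 - a z = (1 - z) * A1 z" using a_eq[of z] z by simp
  have eb: "1 - b z = (1 - z) * B1 z" using b_eq[of z] z by simp
  have alg: "(1 - z) * (mX + mY - 1) * M s + (phi s (a z) * phi s (b z) - phi s z)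
        = ((1 - z) * mX - (1 - a z)) * M s + ((1 - z) * mY - (1 - b z)) * M s + J s (a z) + J s (b z)
           + (1 - phi s (a z)) * (1 - phi s (b z)) - J s z"
    by (rule Jderiv_alg) (simp_all add: J_eq[OF s])
  have "(1 - z) * mX - (1 - a z) = (1 - z)^2 * GX z" unfolding GX_def by (rule JX_eq[OF z(1) z1])
  moreover have "(1 - z) * mY - (1 - b z) = (1 - z)^2 * GY z" unfolding GY_def by (rule JY_eq[OF z(1) z1])
  moreover have "J s (a z) = (1 - z)^2 * ((A1 z)^2 * G2 (f s) (a z))"
    using J_G2f[OF s za] ea by (simp add: power_mult_distrib)
  moreover have "J s (b z) = (1 - z)^2 * ((B1 z)^2 * G2 (f s) (b z))"
    using J_G2f[OF s zb] eb by (simp add: power_mult_distrib)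
  moreover have "(1 - phi s (a z)) * (1 - phi s (b z)) = (1 - z)^2 * (A1 z * B1 z * G1 (f s) (a z) * G1 (f s) (b z))"
  proof -
    have Ha: "1 - phi s (a z) = (1 - z) * (A1 z * G1 (f s) (a z))"
      by (simp only: phi_G1[OF s za] ea mult.assoc)
    have Hb: "1 - phi s (b z) = (1 - z) * (B1 z * G1 (f s) (b z))"
      by (simp only: phi_G1[OF s zb] eb mult.assoc)
    show ?thesis unfolding Ha Hb by (simp add: power2_eq_square mult_ac)
  qed
  moreover have "J s z = (1 - z)^2 * G2 (f s) z" by (rule J_G2f[OF s z(1) z1])
  ultimately have "(1 - z) * (M s * alpha1) + (phi s (a z) * phi s (b z) - phi s z) = (1 - z)^2 * kern2 z s"
    using alg unfolding kern2_def alpha1_def by (simp add: algebra_simps)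
  then show ?thesis using z by simp
qed

lemma J_integral:
  assumes z: "0 \<le> z" "z \<le> 1" and t: "0 \<le> t"
  shows "((\<lambda>s. (1 - z) * (m0 * (exp (alpha1 * s) * alpha1)) - (0 - (phi s (a z) * phi s (b z) - phi s z)))
     has_integral (J t z - J 0 z)) {0..t}"
proof (rule fundamental_theorem_of_calculus_interior[OF t])
  show "continuous_on {0..t} (\<lambda>s. J s z)" unfolding J_def
    by (intro continuous_intros continuous_on_subset[OF cont_phi[OF z]]) auto
  fix u assume u: "u \<in> {0<..<t}"
  have e1: "((\<lambda>u. m0 * exp (alpha1 * u)) has_real_derivative m0 * (exp (alpha1 * u) * alpha1)) (at u)"
    by (auto intro!: derivative_eq_intros)
  have "((\<lambda>u. J u z) has_real_derivative ((1 - z) * (m0 * (exp (alpha1 * u) * alpha1)) - (0 - (phi u (a z) * phi u (b z) - phi u z)))) (at u)"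
    unfolding J_def using u by (intro DERIV_diff[OF DERIV_cmult[OF e1] DERIV_diff[OF DERIV_const deriv_phi[OF z]]]) auto
  then show "((\<lambda>s. J s z) has_vector_derivative ((1 - z) * (m0 * (exp (alpha1 * u) * alpha1)) - (0 - (phi u (a z) * phi u (b z) - phi u z)))) (at u)"
    by (simp add: has_real_derivative_iff_has_vector_derivative)
qed

definition "hh s = (qX + qY) * (m0 * exp (alpha1 * s)) + mX * mY * (m0 * exp (alpha1 * s))^2"

lemma N_integral:
  assumes t: "0 \<le> t"
  shows "((\<lambda>s. alpha2 * N s + hh s) has_integral (N t - N0)) {0..t}"
proof (rule has_integral_dominated_convergence)
  define Mt where "Mt = Mb t"
  define Pt where "Pt = PP t t"
  show "(kern2 (zs n) has_integral (G2 (f t) (zs n) - G2 (f 0) (zs n))) {0..t}" for n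
  proof -
    have z: "0 \<le> zs n" "zs n \<le> 1" using zs_range[of n] by auto
    have "((\<lambda>s. ((1 - zs n) * (m0 * (exp (alpha1 * s) * alpha1)) - (0 - (phi s (a (zs n)) * phi s (b (zs n)) - phi s (zs n)))) / (1 - zs n)^2) has_integral
          ((J t (zs n) - J 0 (zs n)) / (1 - zs n)^2)) {0..t}"
      by (intro has_integral_divide J_integral z t)
    moreover have "(J t (zs n) - J 0 (zs n)) / (1 - zs n)^2 = G2 (f t) (zs n) - G2 (f 0) (zs n)"
      using J_G2f[OF t z] J_G2f[of 0, OF _ z] zs_range[of n] by (simp add: field_simps)
    ultimately have hi: "((\<lambda>s. ((1 - zs n) * (m0 * (exp (alpha1 * s) * alpha1)) - (0 - (phi s (a (zs n)) * phi s (b (zs n)) - phi s (zs n)))) / (1 - zs n)^2) has_integral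
          (G2 (f t) (zs n) - G2 (f 0) (zs n))) {0..t}" by simp
    show ?thesis
    proof (rule has_integral_eq[OF _ hi])
      fix x assume x: "x \<in> {0..t}"
      then have mm: "m0 * (exp (alpha1 * x) * alpha1) = M x * alpha1" by (simp add: M_exp)
      show "((1 - zs n) * (m0 * (exp (alpha1 * x) * alpha1)) - (0 - (phi x (a (zs n)) * phi x (b (zs n)) - phi x (zs n)))) / (1 - zs n)^2
          = kern2 (zs n) x"
      proof -
        have "(1 - zs n) * (M x * alpha1) - (0 - (phi x (a (zs n)) * phi x (b (zs n)) - phi x (zs n)))
           = (1 - zs n) * (M x * alpha1) + (phi x (a (zs n)) * phi x (b (zs n)) - phi x (zs n))" (is "?l = ?r") by simp
        moreover have "0 \<le> x" using x by simp
        note k = kern2_eq[OF zs_range(1) zs_range(2) this, of n]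
        show ?thesis unfolding mm \<open>?l = ?r\<close> by (rule k)
      qed
    qed
  qed
  show "(\<lambda>_. qX * Mt + qY * Mt + mX^2 * Pt + mY^2 * Pt + mX * mY * Mt * Mt + Pt) integrable_on {0..t}"
    by (rule integrable_const_ivl)
  show "\<forall>s\<in>{0..t}. norm (kern2 (zs n) s) \<le> qX * Mt + qY * Mt + mX^2 * Pt + mY^2 * Pt + mX * mY * Mt * Mt + Pt" for n
  proof
    fix s assume s: "s \<in> {0..t}"
    define z where "z = zs n"
    have z: "0 \<le> z" "z \<le> 1" using zs_range[of n] unfolding z_def by auto
    have za: "0 \<le> a z" "a z \<le> 1" using a_range z by auto
    have zb: "0 \<le> b z" "b z \<le> 1" using b_range z by auto
    have s0: "0 \<le> s" "s \<le> t" using s by auto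
    have Ms: "0 \<le> M s" "M s \<le> Mt" unfolding Mt_def Mb_def using M_le s M_nonneg by auto
    have ga: "0 \<le> G1 (f s) (a z)" "G1 (f s) (a z) \<le> Mt" using G1f_range[OF s0(1) za] Ms by auto
    have gb: "0 \<le> G1 (f s) (b z)" "G1 (f s) (b z) \<le> Mt" using G1f_range[OF s0(1) zb] Ms by auto
    have ha: "0 \<le> G2 (f s) (a z)" "G2 (f s) (a z) \<le> Pt" using G2f_range[OF s0 za] unfolding Pt_def by auto
    have hb: "0 \<le> G2 (f s) (b z)" "G2 (f s) (b z) \<le> Pt" using G2f_range[OF s0 zb] unfolding Pt_def by auto
    have hz: "0 \<le> G2 (f s) z" "G2 (f s) z \<le> Pt" using G2f_range[OF s0 z] unfolding Pt_def by auto
    have A: "0 \<le> A1 z" "A1 z \<le> mX" using A1_range[OF z] by auto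
    have B: "0 \<le> B1 z" "B1 z \<le> mY" using B1_range[OF z] by auto
    have X: "0 \<le> GX z" "GX z \<le> qX" using GX_range[OF z] unfolding GX_def by auto
    have Y: "0 \<le> GY z" "GY z \<le> qY" using GY_range[OF z] unfolding GY_def by auto
    have A2: "0 \<le> (A1 z)^2" "(A1 z)^2 \<le> mX^2" using A by (auto intro: power_mono)
    have B2: "0 \<le> (B1 z)^2" "(B1 z)^2 \<le> mY^2" using B by (auto intro: power_mono)
    have p1: "0 \<le> GX z * M s" "GX z * M s \<le> qX * Mt" using X Ms by (auto intro: mult_mono)
    have p2: "0 \<le> GY z * M s" "GY z * M s \<le> qY * Mt" using Y Ms by (auto intro: mult_mono)
    have p3: "0 \<le> (A1 z)^2 * G2 (f s) (a z)" "(A1 z)^2 * G2 (f s) (a z) \<le> mX^2 * Pt" using A2 ha by (auto intro: mult_mono)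
    have p4: "0 \<le> (B1 z)^2 * G2 (f s) (b z)" "(B1 z)^2 * G2 (f s) (b z) \<le> mY^2 * Pt" using B2 hb by (auto intro: mult_mono)
    have p5a: "0 \<le> A1 z * G1 (f s) (a z)" "A1 z * G1 (f s) (a z) \<le> mX * Mt" using A ga by (auto intro: mult_mono)
    have p5b: "0 \<le> B1 z * G1 (f s) (b z)" "B1 z * G1 (f s) (b z) \<le> mY * Mt" using B gb by (auto intro: mult_mono)
    have p5: "0 \<le> (A1 z * G1 (f s) (a z)) * (B1 z * G1 (f s) (b z))"
        "(A1 z * G1 (f s) (a z)) * (B1 z * G1 (f s) (b z)) \<le> (mX * Mt) * (mY * Mt)"
      using p5a p5b by (auto intro: mult_mono)
    have k: "kern2 z s = GX z * M s + GY z * M s + (A1 z)^2 * G2 (f s) (a z) + (B1 z)^2 * G2 (f s) (b z)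
        + (A1 z * G1 (f s) (a z)) * (B1 z * G1 (f s) (b z)) - G2 (f s) z"
      unfolding kern2_def by (simp add: algebra_simps)
    have "\<bar>kern2 z s\<bar> \<le> qX * Mt + qY * Mt + mX^2 * Pt + mY^2 * Pt + (mX * Mt) * (mY * Mt) + Pt"
      unfolding k using p1 p2 p3 p4 p5 hz by linarith
    then show "norm (kern2 (zs n) s) \<le> qX * Mt + qY * Mt + mX^2 * Pt + mY^2 * Pt + mX * mY * Mt * Mt + Pt"
      unfolding z_def by (simp add: algebra_simps)
  qed
  show "\<forall>s\<in>{0..t}. (\<lambda>n. kern2 (zs n) s) \<longlonglongrightarrow> alpha2 * N s + hh s"
  proof
    fix s assume s: "s \<in> {0..t}"
    have s0: "0 \<le> s" using s by simp
    have zr: "\<And>n. zs n \<in> {0..1}" "\<And>n. a (zs n) \<in> {0..1}" "\<And>n. b (zs n) \<in> {0..1}"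
      using zs_range a_range b_range by (auto simp: less_imp_le)
    have l1: "(\<lambda>n. G1 (f s) (a (zs n))) \<longlonglongrightarrow> M s" by (rule G1f_lim[OF s0 zr(2) a_lim])
    have l2: "(\<lambda>n. G1 (f s) (b (zs n))) \<longlonglongrightarrow> M s" by (rule G1f_lim[OF s0 zr(3) b_lim])
    have l3: "(\<lambda>n. G2 (f s) (a (zs n))) \<longlonglongrightarrow> N s" by (rule G2f_lim[OF s0 zr(2) a_lim])
    have l4: "(\<lambda>n. G2 (f s) (b (zs n))) \<longlonglongrightarrow> N s" by (rule G2f_lim[OF s0 zr(3) b_lim])
    have l5: "(\<lambda>n. G2 (f s) (zs n)) \<longlonglongrightarrow> N s" by (rule G2f_lim[OF s0 zr(1) zs_lim])
    have "(\<lambda>n. kern2 (zs n) s) \<longlonglongrightarrow> qX * M s + qY * M s + mX^2 * N s + mY^2 * N s + mX * mY * M s * M s - N s"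
      unfolding kern2_def
      by (intro tendsto_diff tendsto_add tendsto_mult tendsto_power GX_lim GY_lim A1_lim B1_lim l1 l2 l3 l4 l5 tendsto_const)
    moreover have "qX * M s + qY * M s + mX^2 * N s + mY^2 * N s + mX * mY * M s * M s - N s = alpha2 * N s + hh s"
      unfolding hh_def alpha2_def M_exp[OF s0] by (simp add: algebra_simps power2_eq_square)
    ultimately show "(\<lambda>n. kern2 (zs n) s) \<longlonglongrightarrow> alpha2 * N s + hh s" by simp
  qed
  show "(\<lambda>n. G2 (f t) (zs n) - G2 (f 0) (zs n)) \<longlonglongrightarrow> N t - N0"
  proof -
    have zr: "\<And>n. zs n \<in> {0..1}" using zs_range by (auto simp: less_imp_le)
    have "(\<lambda>n. G2 (f t) (zs n) - G2 (f 0) (zs n)) \<longlonglongrightarrow> N t - N 0"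
      by (intro tendsto_diff G2f_lim[OF t zr zs_lim] G2f_lim[OF order_refl zr zs_lim])
    then show ?thesis unfolding N_def N0_def f0_eq .
  qed
qed

end



definition Ef :: "real \<Rightarrow> real \<Rightarrow> real \<Rightarrow> real" where
  "Ef p q t = (if p \<noteq> q then (exp (p * t) - exp (q * t)) / (p - q) else 0) + (if p = q then t * exp (q * t) else 0)"

lemma Ef_deriv: "(Ef p q has_real_derivative (q * Ef p q t + exp (p * t))) (at t)"
proof (cases "p = q")
  case True
  then have e: "Ef p q = (\<lambda>t. t * exp (q * t))" unfolding Ef_def by auto
  have "((\<lambda>t. t * exp (q * t)) has_real_derivative (1 * exp (q * t) + t * (exp (q * t) * q))) (at t)"
    by (auto intro!: derivative_eq_intros)
  then show ?thesis unfolding e using True by (simp add: algebra_simps)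
next
  case False
  then have e: "Ef p q = (\<lambda>t. (exp (p * t) - exp (q * t)) / (p - q))" unfolding Ef_def by auto
  have d: "((\<lambda>t. (exp (p * t) - exp (q * t)) / (p - q)) has_real_derivative ((exp (p * t) * p - exp (q * t) * q) / (p - q))) (at t)"
    using False by (auto intro!: derivative_eq_intros)
  have "(exp (p * t) * p - exp (q * t) * q) / (p - q) = q * ((exp (p * t) - exp (q * t)) / (p - q)) + exp (p * t)"
    using False by (simp add: field_simps)
  then show ?thesis unfolding e using d by simp
qed

lemma Ef_cont: "continuous_on S (Ef p q)"
proof (cases "p = q")
  case True
  then have e: "Ef p q = (\<lambda>t. t * exp (q * t))" unfolding Ef_def by auto
  show ?thesis unfolding e by (intro continuous_intros)
next
  case False
  then have e: "Ef p q = (\<lambda>t. (exp (p * t) - exp (q * t)) / (p - q))" unfolding Ef_def by auto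
  show ?thesis unfolding e by (intro continuous_intros) (use False in auto)
qed

lemma Ef_0: "Ef p q 0 = 0" unfolding Ef_def by simp

context kin
begin

definition "beta = (M2 (pmf pX) - mX^2) + (M2 (pmf pY) - mY^2)"
definition "gamma = mX * mY"
definition "GG t = M2 f0 * exp (alpha2 * t) + beta * m0 * Ef alpha1 alpha2 t + 2 * gamma * m0^2 * Ef (2 * alpha1) alpha2 t"
definition "wN t = (GG t - m0 * exp (alpha1 * t)) / 2"

lemma GG_deriv: "(GG has_real_derivative (alpha2 * GG t + beta * m0 * exp (alpha1 * t) + 2 * gamma * m0^2 * exp (2 * alpha1 * t))) (at t)"
proof -
  have "(GG has_real_derivative (M2 f0 * (exp (alpha2 * t) * alpha2) + beta * m0 * (alpha2 * Ef alpha1 alpha2 t + exp (alpha1 * t))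
      + 2 * gamma * m0^2 * (alpha2 * Ef (2 * alpha1) alpha2 t + exp (2 * alpha1 * t)))) (at t)"
    unfolding GG_def[abs_def]
    by (intro DERIV_add DERIV_cmult Ef_deriv) (auto intro!: derivative_eq_intros)
  then show ?thesis unfolding GG_def by (simp add: algebra_simps)
qed

lemma qsum: "2 * (qX + qY) = M2 (pmf pX) - mX + (M2 (pmf pY) - mY)"
  using G2_one[OF pdX smX] G2_one[OF pdY smY] unfolding qX_def qY_def mX_def mY_def by simp

lemma N_eq: "0 \<le> t \<Longrightarrow> N t = wN t"
proof (rule ode_from_integral[where c = alpha2 and h = hh and yi = N0 and y = N and w = wN and T = t])
  show "((\<lambda>s. alpha2 * N s + hh s) has_integral (N t - N0)) {0..t}" if "0 \<le> t" for t
    by (rule N_integral[OF that])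
  show "continuous_on {0..} hh" unfolding hh_def by (intro continuous_intros)
  show "continuous_on {0..} wN" unfolding wN_def GG_def by (intro continuous_intros Ef_cont) auto
  show "wN 0 = N0"
    unfolding wN_def GG_def N0_def m0_def using G2_one[OF pd0 sm0] Ef_0 by simp
  show "(wN has_real_derivative alpha2 * wN t + hh t) (at t)" if "0 < t" for t
  proof -
    have "(wN has_real_derivative ((alpha2 * GG t + beta * m0 * exp (alpha1 * t) + 2 * gamma * m0^2 * exp (2 * alpha1 * t))
          - m0 * (exp (alpha1 * t) * alpha1)) / 2) (at t)"
      unfolding wN_def[abs_def] by (intro DERIV_cdivide DERIV_diff GG_deriv) (auto intro!: derivative_eq_intros)
    moreover have "((alpha2 * GG t + beta * m0 * exp (alpha1 * t) + 2 * gamma * m0^2 * exp (2 * alpha1 * t))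
          - m0 * (exp (alpha1 * t) * alpha1)) / 2 = alpha2 * wN t + hh t"
    proof -
      have ex: "exp (2 * alpha1 * t) = (exp (alpha1 * t))^2"
        by (simp add: power2_eq_square exp_add[symmetric])
      have key: "beta = 2 * (qX + qY) - alpha2 + alpha1"
        unfolding qsum beta_def alpha1_def alpha2_def by simp
      show ?thesis unfolding wN_def hh_def gamma_def ex key
        by (simp add: field_simps power2_eq_square)
    qed
    ultimately show ?thesis by simp
  qed
qed

lemma Var_formula: "0 \<le> t \<Longrightarrow> Var (f t) = GG t - m0^2 * exp (2 * alpha1 * t)"
proof -
  assume t: "0 \<le> t"
  have A: "2 * N t = M2 (f t) - M1 (f t)" unfolding N_def by (rule G2_one[OF pd_f[OF t] sm_f2[OF t]])
  have B: "M1 (f t) = m0 * exp (alpha1 * t)" using M_exp[OF t] unfolding M_def .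
  have ex: "exp (2 * alpha1 * t) = (exp (alpha1 * t))^2"
    by (simp add: power2_eq_square exp_add[symmetric])
  have C: "N t = (GG t - m0 * exp (alpha1 * t)) / 2" using N_eq[OF t] unfolding wN_def .
  have M2e: "M2 (f t) = GG t" using A B C by (simp add: field_simps)
  show ?thesis unfolding Var_def M2e B ex by (simp add: power_mult_distrib)
qed

end

theorem proposition3p6:
  fixes pX pY :: "nat pmf" and f0 :: "nat \<Rightarrow> real" and f :: "real \<Rightarrow> nat \<Rightarrow> real"
    and m0 t :: real
  assumes "pmf pX 0 \<noteq> 1" and "pmf pY 0 \<noteq> 1"
    and "integrable (measure_pmf pX) (\<lambda>x. (real x)^2)"
    and "integrable (measure_pmf pY) (\<lambda>x. (real x)^2)"
    and "prob_density f0" and "summable (\<lambda>v. (real v)^2 * f0 v)"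
    and "m0 = M1 f0"
    and "kinetic_solution pX pY f0 f"
    and "t > 0"
  shows
    "let mX = measure_pmf.expectation pX real; mY = measure_pmf.expectation pY real;
         \<alpha>1 = mX + mY - 1; \<alpha>2 = mX^2 + mY^2 - 1;
         \<beta> = measure_pmf.variance pX real + measure_pmf.variance pY real;
         \<gamma> = mX * mY
     in Var (f t) =
        M2 f0 * exp (\<alpha>2 * t) - m0^2 * exp (2 * \<alpha>1 * t)
        + \<beta> * m0 * ((if \<alpha>1 \<noteq> \<alpha>2 then (exp (\<alpha>1 * t) - exp (\<alpha>2 * t)) / (\<alpha>1 - \<alpha>2) else 0)
                     + (if \<alpha>1 = \<alpha>2 then t * exp (\<alpha>2 * t) else 0))
        + 2 * \<gamma> * m0^2 * ((if 2 * \<alpha>1 \<noteq> \<alpha>2 then (exp (2 * \<alpha>1 * t) - exp (\<alpha>2 * t)) / (2 * \<alpha>1 - \<alpha>2) else 0)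
                     + (if 2 * \<alpha>1 = \<alpha>2 then t * exp (\<alpha>2 * t) else 0))"
proof -
  interpret k: kin pX pY f0 f
    by unfold_locales (use assms in auto)
  have eX: "measure_pmf.expectation pX real = k.mX" unfolding k.mX_def by (rule pmf_moments(2)[OF assms(3)])
  have eY: "measure_pmf.expectation pY real = k.mY" unfolding k.mY_def by (rule pmf_moments(2)[OF assms(4)])
  have vX: "measure_pmf.variance pX real = M2 (pmf pX) - k.mX^2" unfolding k.mX_def by (rule pmf_moments(3)[OF assms(3)])
  have vY: "measure_pmf.variance pY real = M2 (pmf pY) - k.mY^2" unfolding k.mY_def by (rule pmf_moments(3)[OF assms(4)])
  have m: "m0 = k.m0" unfolding k.m0_def using assms(7) .
  have V: "Var (f t) = k.GG t - k.m0^2 * exp (2 * k.alpha1 * t)" using k.Var_formula assms(9) by simp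
  show ?thesis unfolding Let_def unfolding vX vY unfolding eX eY m V k.GG_def Ef_def k.alpha1_def k.alpha2_def k.beta_def k.gamma_def
    by (simp add: algebra_simps)
qed


end
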